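(* Let $\alpha=(\{D_t\},\{\alpha_t\})$ be a partial action of a discrete group $\Gamma$ on a locally compact Hausdorff space $X$ with every $D_t$ compact (and open), let $\mathcal G=X\rtimes\Gamma$ with a quasi-invariant probability measure of full support, $A=C_0(X)$, and let $T:C_r^*(\mathcal G)\to C_r^*(\mathcal G)$ be a bounded $A$-linear operator. Define $\varphi_T(x,t)=E(\chi_t^**T\chi_t)(x)$ for $(x,t)\in\mathcal G$. Then: (i) $\varphi_T\in C_b(\mathcal G)$ and $\|\varphi_T\|_\infty\le\|T\|$; (ii) if $T$ has finite $A$-rank and takes values in $\mathrm{span}_A\{\chi_t:t\in\Gamma\}$, then $\varphi_T\in C_c(\mathcal G)$ and $\|\varphi_T\|_{M_0A(\mathcal G)}\le\|T\|_{cb}$.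
   Context: A partial action: open $D_t\subseteq X$, homeomorphisms $\alpha_t:D_{t^{-1}}\to D_t$, $D_1=X$, $\alpha_1=\mathrm{id}$, $\alpha_s\circ\alpha_t\subseteq\alpha_{st}$. The groupoid $\mathcal G=X\rtimes\Gamma=\bigsqcup_t D_t\times\{t\}$ has $d(x,t)=x$, $r(x,t)=\alpha_t(x)$, product $(\alpha_t(x),s)(x,t)=(x,st)$, topology from $X\times\Gamma$; it is étale with unit space $X$. $\chi_t$ is the indicator function of $D_t\times\{t\}$, an element of $C_c(\mathcal G)\subseteq C_r^*(\mathcal G)$ (reduced groupoid $C^*$-algebra with convolution and involution $f^*(\gamma)=\overline{f(\gamma^{-1})}$). $A=C_0(X)$ acts on the right by $f*a(\gamma)=f(\gamma)a(d(\gamma))$; $E:C_r^*(\mathcal G)\to C_0(X)$ is the conditional expectation extending restriction to $X$; $\langle f,g\rangle_A=E(f^**g)$; $\mathrm{span}_A\{\chi_t\}$ means finite sums $\sum_j\chi_{t_j}*a_j$ with $a_j\in A$. An $A$-linear map has $A$-rank one if it is $f\mapsto h*\langle g,f\rangle_A$ and finite $A$-rank if a finite sum of such. $\|\varphi\|_{M_0A(\mathcal G)}$ is the cb norm of pointwise multiplication by $\varphi$ on Renault's Fourier algebra $A(\mathcal G)$ (equivalently, for continuous bounded $\varphi$, of pointwise multiplication on $C_r^*(\mathcal G)$). *)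

theory Defs
  imports "HOL-Analysis.Analysis" "HOL-Probability.Probability"
begin

text \<open>
  The space X is the whole (nonempty) type 'a with its topology.
  The discrete group \<Gamma> is the type 'g of class group_add, written additively:
  the product st is s + t, the inverse t^-1 is -t, the unit is 0 (the group need
  not be commutative).  A partial action is given by D :: 'g => 'a set and
  al :: 'g => 'a => 'a, where al t is a homeomorphism from D(-t) onto D t.
  The transformation groupoid is G = {(x,t). x in D(-t)} with d(x,t) = x,
  r(x,t) = al t x, (al t x, s)(x,t) = (x, s + t), (x,t)^-1 = (al t x, -t),
  and unit space identified with {(x,0)}.
\<close>

definition partial_action :: "('g::group_add \<Rightarrow> 'a::topological_space set) \<Rightarrow> ('g \<Rightarrow> 'a \<Rightarrow> 'a) \<Rightarrow> bool" where
  "partial_action D al \<longleftrightarrow>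
     (\<forall>t. open (D t)) \<and> D 0 = UNIV \<and> (\<forall>x. al 0 x = x) \<and>
     (\<forall>t. \<exists>g. homeomorphism (D (- t)) (D t) (al t) g) \<and>
     (\<forall>s t x. x \<in> D (- t) \<and> al t x \<in> D (- s) \<longrightarrow>
         x \<in> D (- (s + t)) \<and> al s (al t x) = al (s + t) x)"

definition grpd :: "('g::group_add \<Rightarrow> 'a set) \<Rightarrow> ('a \<times> 'g) set" where
  "grpd D = {(x, t). x \<in> D (- t)}"

definition fibre :: "('g::group_add \<Rightarrow> 'a set) \<Rightarrow> 'a \<Rightarrow> ('a \<times> 'g) set" where
  "fibre D x = {(y, t). y = x \<and> x \<in> D (- t)}"

definition gmul :: "('a \<times> 'g::group_add) \<Rightarrow> ('a \<times> 'g) \<Rightarrow> ('a \<times> 'g)" where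
  "gmul \<gamma> \<eta> = (fst \<eta>, snd \<gamma> + snd \<eta>)"

definition ginv :: "('g::group_add \<Rightarrow> 'a \<Rightarrow> 'a) \<Rightarrow> ('a \<times> 'g) \<Rightarrow> ('a \<times> 'g)" where
  "ginv al \<gamma> = (al (snd \<gamma>) (fst \<gamma>), - snd \<gamma>)"

definition chi :: "('g::group_add \<Rightarrow> 'a set) \<Rightarrow> 'g \<Rightarrow> ('a \<times> 'g) \<Rightarrow> complex" where
  "chi D t = (\<lambda>(x, s). if s = t \<and> x \<in> D (- t) then 1 else 0)"

definition C0 :: "('a::topological_space \<Rightarrow> complex) \<Rightarrow> bool" where
  "C0 a \<longleftrightarrow> continuous_on UNIV a \<and>
     (\<forall>e>0. \<exists>K. compact K \<and> (\<forall>x. x \<notin> K \<longrightarrow> cmod (a x) < e))"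

text \<open>continuity on G (topology of G as subspace of X x discrete \<Gamma>), slice by slice\<close>
definition cont_G :: "('g::group_add \<Rightarrow> 'a::topological_space set) \<Rightarrow> ('a \<times> 'g \<Rightarrow> complex) \<Rightarrow> bool" where
  "cont_G D f \<longleftrightarrow> (\<forall>t. continuous_on (D (- t)) (\<lambda>x. f (x, t)))"

definition Cc :: "('g::group_add \<Rightarrow> 'a::topological_space set) \<Rightarrow> ('a \<times> 'g \<Rightarrow> complex) \<Rightarrow> bool" where
  "Cc D f \<longleftrightarrow> (\<forall>\<gamma>. \<gamma> \<notin> grpd D \<longrightarrow> f \<gamma> = 0) \<and> cont_G D f \<and>
     (\<exists>F K. finite F \<and> (\<forall>t\<in>F. compact (K t) \<and> K t \<subseteq> D (- t)) \<and>
        (\<forall>x t. f (x, t) \<noteq> 0 \<longrightarrow> t \<in> F \<and> x \<in> K t))"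

definition Cb :: "('g::group_add \<Rightarrow> 'a::topological_space set) \<Rightarrow> ('a \<times> 'g \<Rightarrow> complex) \<Rightarrow> bool" where
  "Cb D f \<longleftrightarrow> (\<forall>\<gamma>. \<gamma> \<notin> grpd D \<longrightarrow> f \<gamma> = 0) \<and> cont_G D f \<and>
     (\<exists>B. \<forall>\<gamma>. cmod (f \<gamma>) \<le> B)"

definition unit_vecs :: "('g::group_add \<Rightarrow> 'a set) \<Rightarrow> nat \<Rightarrow> 'a \<Rightarrow> (nat \<Rightarrow> 'a \<times> 'g \<Rightarrow> complex) set" where
  "unit_vecs D n x = {\<xi>. finite {(i, \<gamma>). \<xi> i \<gamma> \<noteq> 0} \<and>
      (\<forall>i \<gamma>. \<xi> i \<gamma> \<noteq> 0 \<longrightarrow> i < n \<and> \<gamma> \<in> fibre D x) \<and>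
      (\<Sum>(i, \<gamma>)\<in>{(i, \<gamma>). \<xi> i \<gamma> \<noteq> 0}. (cmod (\<xi> i \<gamma>))\<^sup>2) \<le> 1}"

text \<open>matrix coefficient <(lambda_x^(n) F) xi, zeta> of the n-fold amplification of the
  regular representation lambda_x on l^2(G_x), (lambda_x(f) xi)(g) = sum_{h in G_x} f(g h^-1) xi(h)\<close>
definition coeff :: "('g::group_add \<Rightarrow> 'a \<Rightarrow> 'a) \<Rightarrow> (nat \<Rightarrow> nat \<Rightarrow> 'a \<times> 'g \<Rightarrow> complex) \<Rightarrow>
    (nat \<Rightarrow> 'a \<times> 'g \<Rightarrow> complex) \<Rightarrow> (nat \<Rightarrow> 'a \<times> 'g \<Rightarrow> complex) \<Rightarrow> complex" where
  "coeff al F \<xi> \<zeta> =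
     (\<Sum>(i, \<gamma>)\<in>{(i, \<gamma>). \<zeta> i \<gamma> \<noteq> 0}. \<Sum>(j, \<eta>)\<in>{(j, \<eta>). \<xi> j \<eta> \<noteq> 0}.
        F i j (gmul \<gamma> (ginv al \<eta>)) * \<xi> j \<eta> * cnj (\<zeta> i \<gamma>))"

text \<open>norm in M_n(C_r^*(G)) (sup over x of the amplified regular representations), in [0,\<infinity>]\<close>
definition matnorm :: "('g::group_add \<Rightarrow> 'a set) \<Rightarrow> ('g \<Rightarrow> 'a \<Rightarrow> 'a) \<Rightarrow> nat \<Rightarrow>
    (nat \<Rightarrow> nat \<Rightarrow> 'a \<times> 'g \<Rightarrow> complex) \<Rightarrow> ennreal" where
  "matnorm D al n F = (SUP x. SUP \<xi>\<in>unit_vecs D n x. SUP \<zeta>\<in>unit_vecs D n x.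
       ennreal (cmod (coeff al F \<xi> \<zeta>)))"

definition rnorm :: "('g::group_add \<Rightarrow> 'a set) \<Rightarrow> ('g \<Rightarrow> 'a \<Rightarrow> 'a) \<Rightarrow> ('a \<times> 'g \<Rightarrow> complex) \<Rightarrow> real" where
  "rnorm D al f = enn2real (matnorm D al 1 (\<lambda>_ _. f))"

text \<open>C_r^*(G), realised (via the injective map j) as functions on G: the
  reduced-norm limits of elements of C_c(G).\<close>
definition Cr :: "('g::group_add \<Rightarrow> 'a::topological_space set) \<Rightarrow> ('g \<Rightarrow> 'a \<Rightarrow> 'a) \<Rightarrow> ('a \<times> 'g \<Rightarrow> complex) set" where
  "Cr D al = {f. (\<forall>\<gamma>. \<gamma> \<notin> grpd D \<longrightarrow> f \<gamma> = 0) \<and>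
      (\<forall>e>0. \<exists>g. Cc D g \<and> matnorm D al 1 (\<lambda>_ _. (\<lambda>\<gamma>. f \<gamma> - g \<gamma>)) \<le> ennreal e)}"

definition conv :: "('g::group_add \<Rightarrow> 'a set) \<Rightarrow> ('g \<Rightarrow> 'a \<Rightarrow> 'a) \<Rightarrow> ('a \<times> 'g \<Rightarrow> complex) \<Rightarrow>
    ('a \<times> 'g \<Rightarrow> complex) \<Rightarrow> ('a \<times> 'g \<Rightarrow> complex)" where
  "conv D al f g = (\<lambda>\<gamma>. infsum (\<lambda>\<eta>. f (gmul \<gamma> (ginv al \<eta>)) * g \<eta>) (fibre D (fst \<gamma>)))"

definition star :: "('g::group_add \<Rightarrow> 'a \<Rightarrow> 'a) \<Rightarrow> ('a \<times> 'g \<Rightarrow> complex) \<Rightarrow> ('a \<times> 'g \<Rightarrow> complex)" where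
  "star al f = (\<lambda>\<gamma>. cnj (f (ginv al \<gamma>)))"

definition ract :: "('a \<times> 'g \<Rightarrow> complex) \<Rightarrow> ('a \<Rightarrow> complex) \<Rightarrow> ('a \<times> 'g \<Rightarrow> complex)" where
  "ract f a = (\<lambda>\<gamma>. f \<gamma> * a (fst \<gamma>))"

definition Econd :: "('a \<times> 'g::group_add \<Rightarrow> complex) \<Rightarrow> ('a \<Rightarrow> complex)" where
  "Econd f = (\<lambda>x. f (x, 0))"

definition Ainner :: "('g::group_add \<Rightarrow> 'a set) \<Rightarrow> ('g \<Rightarrow> 'a \<Rightarrow> 'a) \<Rightarrow> ('a \<times> 'g \<Rightarrow> complex) \<Rightarrow>
    ('a \<times> 'g \<Rightarrow> complex) \<Rightarrow> ('a \<Rightarrow> complex)" where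
  "Ainner D al f g = Econd (conv D al (star al f) g)"

definition bounded_Alinear :: "('g::group_add \<Rightarrow> 'a::topological_space set) \<Rightarrow> ('g \<Rightarrow> 'a \<Rightarrow> 'a) \<Rightarrow>
    (('a \<times> 'g \<Rightarrow> complex) \<Rightarrow> ('a \<times> 'g \<Rightarrow> complex)) \<Rightarrow> bool" where
  "bounded_Alinear D al T \<longleftrightarrow>
     (\<forall>f\<in>Cr D al. T f \<in> Cr D al) \<and>
     (\<forall>f\<in>Cr D al. \<forall>g\<in>Cr D al. T (\<lambda>\<gamma>. f \<gamma> + g \<gamma>) = (\<lambda>\<gamma>. T f \<gamma> + T g \<gamma>)) \<and>
     (\<forall>f\<in>Cr D al. \<forall>c. T (\<lambda>\<gamma>. c * f \<gamma>) = (\<lambda>\<gamma>. c * T f \<gamma>)) \<and>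
     (\<forall>f\<in>Cr D al. \<forall>a. C0 a \<longrightarrow> T (ract f a) = ract (T f) a) \<and>
     (\<exists>C. \<forall>f\<in>Cr D al. rnorm D al (T f) \<le> C * rnorm D al f)"

definition opnorm :: "('g::group_add \<Rightarrow> 'a::topological_space set) \<Rightarrow> ('g \<Rightarrow> 'a \<Rightarrow> 'a) \<Rightarrow>
    (('a \<times> 'g \<Rightarrow> complex) \<Rightarrow> ('a \<times> 'g \<Rightarrow> complex)) \<Rightarrow> real" where
  "opnorm D al T = Sup {rnorm D al (T f) | f. f \<in> Cr D al \<and> rnorm D al f \<le> 1}"

definition cbnorm :: "('g::group_add \<Rightarrow> 'a::topological_space set) \<Rightarrow> ('g \<Rightarrow> 'a \<Rightarrow> 'a) \<Rightarrow>
    (('a \<times> 'g \<Rightarrow> complex) \<Rightarrow> ('a \<times> 'g \<Rightarrow> complex)) \<Rightarrow> ennreal" where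
  "cbnorm D al T = (SUP n. SUP F\<in>{F. (\<forall>i<n. \<forall>j<n. F i j \<in> Cr D al) \<and> matnorm D al n F \<le> 1}.
       matnorm D al n (\<lambda>i j. T (F i j)))"

definition M0A_norm :: "('g::group_add \<Rightarrow> 'a::topological_space set) \<Rightarrow> ('g \<Rightarrow> 'a \<Rightarrow> 'a) \<Rightarrow>
    ('a \<times> 'g \<Rightarrow> complex) \<Rightarrow> ennreal" where
  "M0A_norm D al \<phi> = cbnorm D al (\<lambda>f \<gamma>. \<phi> \<gamma> * f \<gamma>)"

definition finite_Arank :: "('g::group_add \<Rightarrow> 'a::topological_space set) \<Rightarrow> ('g \<Rightarrow> 'a \<Rightarrow> 'a) \<Rightarrow>
    (('a \<times> 'g \<Rightarrow> complex) \<Rightarrow> ('a \<times> 'g \<Rightarrow> complex)) \<Rightarrow> bool" where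
  "finite_Arank D al T \<longleftrightarrow> (\<exists>(n::nat) h g. (\<forall>i<n. h i \<in> Cr D al \<and> g i \<in> Cr D al) \<and>
      (\<forall>f\<in>Cr D al. T f = (\<lambda>\<gamma>. \<Sum>i<n. ract (h i) (Ainner D al (g i) f) \<gamma>)))"

definition in_span_A_chi :: "('g::group_add \<Rightarrow> 'a::topological_space set) \<Rightarrow> ('a \<times> 'g \<Rightarrow> complex) \<Rightarrow> bool" where
  "in_span_A_chi D f \<longleftrightarrow> (\<exists>F a. finite F \<and> (\<forall>t\<in>F. C0 (a t)) \<and>
      f = (\<lambda>\<gamma>. \<Sum>t\<in>F. ract (chi D t) (a t) \<gamma>))"

definition phiT :: "('g::group_add \<Rightarrow> 'a::topological_space set) \<Rightarrow> ('g \<Rightarrow> 'a \<Rightarrow> 'a) \<Rightarrow>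
    (('a \<times> 'g \<Rightarrow> complex) \<Rightarrow> ('a \<times> 'g \<Rightarrow> complex)) \<Rightarrow> ('a \<times> 'g \<Rightarrow> complex)" where
  "phiT D al T = (\<lambda>(x, t). if (x, t) \<in> grpd D
      then Econd (conv D al (star al (chi D t)) (T (chi D t))) x else 0)"

definition qi_full_prob :: "('g::group_add \<Rightarrow> 'a::topological_space set) \<Rightarrow> ('g \<Rightarrow> 'a \<Rightarrow> 'a) \<Rightarrow> 'a measure \<Rightarrow> bool" where
  "qi_full_prob D al \<mu> \<longleftrightarrow> prob_space \<mu> \<and> sets \<mu> = sets borel \<and>
     (\<forall>U. open U \<and> U \<noteq> {} \<longrightarrow> emeasure \<mu> U > 0) \<and>
     (\<forall>t E. E \<in> sets borel \<and> E \<subseteq> D (- t) \<longrightarrow>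
        (emeasure \<mu> (al t ` E) = 0 \<longleftrightarrow> emeasure \<mu> E = 0))"

end

theory Submission
  imports Defs
begin

lemma pa_D0: "partial_action D al \<Longrightarrow> D 0 = UNIV"
  by (simp add: partial_action_def)

lemma pa_al0: "partial_action D al \<Longrightarrow> al 0 x = x"
  by (simp add: partial_action_def)

lemma pa_open: "partial_action D al \<Longrightarrow> open (D t)"
  by (simp add: partial_action_def)

lemma pa_mem: assumes "partial_action D al" "x \<in> D (- t)" shows "al t x \<in> D t"
proof -
  obtain g where "homeomorphism (D (- t)) (D t) (al t) g" using assms(1) unfolding partial_action_def by blast
  then show ?thesis using assms(2) unfolding homeomorphism_def by blast
qed

lemma pa_comp: assumes "partial_action D al" "x \<in> D (- t)" "al t x \<in> D (- s)"
  shows "x \<in> D (- (s + t)) \<and> al s (al t x) = al (s + t) x"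
  using assms unfolding partial_action_def by blast

lemma pa_inv: assumes "partial_action D al" "x \<in> D (- t)" shows "al (- t) (al t x) = x"
proof -
  have "al t x \<in> D (- (- t))" using pa_mem[OF assms] by simp
  from pa_comp[OF assms this] show ?thesis using pa_al0[OF assms(1)] by simp
qed

lemma pa_gm: assumes "partial_action D al" "x \<in> D (- u)" "x \<in> D (- v)"
  shows "al v x \<in> D (- (u + - v))"
proof -
  have 1: "al v x \<in> D (- (- v))" using pa_mem[OF assms(1,3)] by simp
  have "al (- v) (al v x) \<in> D (- u)" using pa_inv[OF assms(1,3)] assms(2) by simp
  from pa_comp[OF assms(1) 1 this] show ?thesis by simp
qed

lemma gmul_ginv: "gmul (y, u) (ginv al (y, v)) = (al v y, u + - v)"
  by (simp add: gmul_def ginv_def)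

definition supp :: "(nat \<Rightarrow> 'b \<Rightarrow> complex) \<Rightarrow> (nat \<times> 'b) set" where
  "supp \<xi> = {(i, \<gamma>). \<xi> i \<gamma> \<noteq> 0}"

definition nrm :: "(nat \<Rightarrow> 'b \<Rightarrow> complex) \<Rightarrow> real" where
  "nrm \<xi> = (\<Sum>(i, \<gamma>)\<in>supp \<xi>. (cmod (\<xi> i \<gamma>))\<^sup>2)"

lemma unit_vecs_iff: "\<xi> \<in> unit_vecs D n x \<longleftrightarrow> finite (supp \<xi>) \<and>
   (\<forall>i \<gamma>. \<xi> i \<gamma> \<noteq> 0 \<longrightarrow> i < n \<and> \<gamma> \<in> fibre D x) \<and> nrm \<xi> \<le> 1"
  by (simp add: unit_vecs_def supp_def nrm_def)

lemma coeff_supp: "coeff al F \<xi> \<zeta> = (\<Sum>(i, \<gamma>)\<in>supp \<zeta>. \<Sum>(j, \<eta>)\<in>supp \<xi>.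
        F i j (gmul \<gamma> (ginv al \<eta>)) * \<xi> j \<eta> * cnj (\<zeta> i \<gamma>))"
  by (simp add: coeff_def supp_def)

lemma coeff_superset:
  assumes "finite A" "supp \<zeta> \<subseteq> A" "finite B" "supp \<xi> \<subseteq> B"
  shows "coeff al F \<xi> \<zeta> = (\<Sum>(i, \<gamma>)\<in>A. \<Sum>(j, \<eta>)\<in>B.
        F i j (gmul \<gamma> (ginv al \<eta>)) * \<xi> j \<eta> * cnj (\<zeta> i \<gamma>))"
proof -
  have "coeff al F \<xi> \<zeta> = (\<Sum>(i, \<gamma>)\<in>supp \<zeta>. \<Sum>(j, \<eta>)\<in>B.
        F i j (gmul \<gamma> (ginv al \<eta>)) * \<xi> j \<eta> * cnj (\<zeta> i \<gamma>))"
    unfolding coeff_supp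
    apply (rule sum.cong[OF refl])
    apply (clarsimp)
    apply (rule sum.mono_neutral_left)
    using assms by (auto simp: supp_def)
  also have "\<dots> = (\<Sum>(i, \<gamma>)\<in>A. \<Sum>(j, \<eta>)\<in>B.
        F i j (gmul \<gamma> (ginv al \<eta>)) * \<xi> j \<eta> * cnj (\<zeta> i \<gamma>))"
    apply (rule sum.mono_neutral_left)
    using assms by (auto simp: supp_def)
  finally show ?thesis .
qed

lemma nrm_superset:
  assumes "finite A" "supp \<xi> \<subseteq> A"
  shows "nrm \<xi> = (\<Sum>(i, \<gamma>)\<in>A. (cmod (\<xi> i \<gamma>))\<^sup>2)"
  unfolding nrm_def
  apply (rule sum.mono_neutral_left)
  using assms by (auto simp: supp_def)

lemma nrm_nonneg: "nrm \<xi> \<ge> 0"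
  unfolding nrm_def by (auto intro: sum_nonneg)

lemma double_sum_bound:
  fixes c :: "'s \<Rightarrow> 'r \<Rightarrow> complex" and x :: "'r \<Rightarrow> complex" and y :: "'s \<Rightarrow> complex"
  assumes S: "finite S" and R: "finite R"
    and P: "\<And>s r. s \<in> S \<Longrightarrow> r \<in> R \<Longrightarrow> c s r \<noteq> 0 \<Longrightarrow> P s r"
    and B: "\<And>s r. s \<in> S \<Longrightarrow> r \<in> R \<Longrightarrow> cmod (c s r) \<le> B" and B0: "B \<ge> 0"
    and c1: "\<And>r. r \<in> R \<Longrightarrow> card {s\<in>S. P s r} \<le> 1"
    and c2: "\<And>s. s \<in> S \<Longrightarrow> card {r\<in>R. P s r} \<le> 1"
  shows "cmod (\<Sum>s\<in>S. \<Sum>r\<in>R. c s r * x r * y s) \<le>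
     B * ((\<Sum>r\<in>R. (cmod (x r))\<^sup>2) + (\<Sum>s\<in>S. (cmod (y s))\<^sup>2)) / 2"
proof -
  have t: "cmod (c s r * x r * y s) \<le> (if P s r then B * ((cmod (x r))\<^sup>2 + (cmod (y s))\<^sup>2) / 2 else 0)"
    if "s \<in> S" "r \<in> R" for s r
  proof (cases "P s r")
    case True
    have "cmod (c s r * x r * y s) = cmod (c s r) * (cmod (x r) * cmod (y s))" by (simp add: norm_mult)
    also have "\<dots> \<le> B * (cmod (x r) * cmod (y s))"
      using B[OF that] by (intro mult_right_mono) auto
    also have "cmod (x r) * cmod (y s) \<le> ((cmod (x r))\<^sup>2 + (cmod (y s))\<^sup>2) / 2"
      using sum_squares_bound[of "cmod (x r)" "cmod (y s)"] by (simp add: power2_eq_square field_simps)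
    then have "B * (cmod (x r) * cmod (y s)) \<le> B * (((cmod (x r))\<^sup>2 + (cmod (y s))\<^sup>2) / 2)"
      using B0 by (rule mult_left_mono)
    finally show ?thesis using True by simp
  next
    case False
    then have "c s r = 0" using P that by blast
    then show ?thesis using False by simp
  qed
  have "cmod (\<Sum>s\<in>S. \<Sum>r\<in>R. c s r * x r * y s) \<le> (\<Sum>s\<in>S. \<Sum>r\<in>R. cmod (c s r * x r * y s))"
    by (rule order_trans[OF norm_sum sum_mono[OF norm_sum]])
  also have "\<dots> \<le> (\<Sum>s\<in>S. \<Sum>r\<in>R. (if P s r then B * ((cmod (x r))\<^sup>2 + (cmod (y s))\<^sup>2) / 2 else 0))"
    by (intro sum_mono t)
  also have "\<dots> = B / 2 * ((\<Sum>s\<in>S. \<Sum>r\<in>R. (if P s r then (cmod (x r))\<^sup>2 else 0)) +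
                 (\<Sum>s\<in>S. \<Sum>r\<in>R. (if P s r then (cmod (y s))\<^sup>2 else 0)))"
    by (simp add: sum_distrib_left sum.distrib[symmetric] if_distrib field_simps cong: if_cong)
  finally have main: "cmod (\<Sum>s\<in>S. \<Sum>r\<in>R. c s r * x r * y s) \<le> B / 2 * ((\<Sum>s\<in>S. \<Sum>r\<in>R. (if P s r then (cmod (x r))\<^sup>2 else 0)) +
                 (\<Sum>s\<in>S. \<Sum>r\<in>R. (if P s r then (cmod (y s))\<^sup>2 else 0)))" .
  have b1: "(\<Sum>s\<in>S. \<Sum>r\<in>R. (if P s r then (cmod (x r))\<^sup>2 else 0)) \<le> (\<Sum>r\<in>R. (cmod (x r))\<^sup>2)"
  proof -
    have "(\<Sum>s\<in>S. \<Sum>r\<in>R. (if P s r then (cmod (x r))\<^sup>2 else 0)) =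
          (\<Sum>r\<in>R. (cmod (x r))\<^sup>2 * card {s\<in>S. P s r})"
      by (subst sum.swap) (simp add: sum.If_cases[OF S] S Int_def mult.commute)
    also have "\<dots> \<le> (\<Sum>r\<in>R. (cmod (x r))\<^sup>2)"
      by (intro sum_mono) (use c1 in \<open>auto intro!: mult_left_le\<close>)
    finally show ?thesis .
  qed
  have b2: "(\<Sum>s\<in>S. \<Sum>r\<in>R. (if P s r then (cmod (y s))\<^sup>2 else 0)) \<le> (\<Sum>s\<in>S. (cmod (y s))\<^sup>2)"
  proof -
    have "(\<Sum>s\<in>S. \<Sum>r\<in>R. (if P s r then (cmod (y s))\<^sup>2 else 0)) =
          (\<Sum>s\<in>S. (cmod (y s))\<^sup>2 * card {r\<in>R. P s r})"
      by (simp add: sum.If_cases[OF R] R Int_def mult.commute)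
    also have "\<dots> \<le> (\<Sum>s\<in>S. (cmod (y s))\<^sup>2)"
      by (intro sum_mono) (use c2 in \<open>auto intro!: mult_left_le\<close>)
    finally show ?thesis .
  qed
  have "B / 2 * ((\<Sum>s\<in>S. \<Sum>r\<in>R. (if P s r then (cmod (x r))\<^sup>2 else 0)) +
                 (\<Sum>s\<in>S. \<Sum>r\<in>R. (if P s r then (cmod (y s))\<^sup>2 else 0))) \<le>
        B / 2 * ((\<Sum>r\<in>R. (cmod (x r))\<^sup>2) + (\<Sum>s\<in>S. (cmod (y s))\<^sup>2))"
    using B0 b1 b2 by (intro mult_left_mono) auto
  with main show ?thesis by simp
qed

lemma matnorm_upper:
  "\<xi> \<in> unit_vecs D n y \<Longrightarrow> \<zeta> \<in> unit_vecs D n y \<Longrightarrow>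
   ennreal (cmod (coeff al F \<xi> \<zeta>)) \<le> matnorm D al n F"
  unfolding matnorm_def
  by (rule SUP_upper2[OF UNIV_I], rule SUP_upper2, assumption, rule SUP_upper, assumption)

lemma matnorm_le:
  assumes "\<And>y \<xi> \<zeta>. \<xi> \<in> unit_vecs D n y \<Longrightarrow> \<zeta> \<in> unit_vecs D n y \<Longrightarrow>
     cmod (coeff al F \<xi> \<zeta>) \<le> B"
  shows "matnorm D al n F \<le> ennreal B"
  unfolding matnorm_def
  by (intro SUP_least) (simp add: assms ennreal_leI)

lemma coeff_add: "coeff al (\<lambda>i j \<gamma>. F i j \<gamma> + G i j \<gamma>) \<xi> \<zeta> = coeff al F \<xi> \<zeta> + coeff al G \<xi> \<zeta>"
  unfolding coeff_supp by (simp add: split_def distrib_right sum.distrib)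

lemma coeff_sum: "coeff al (\<lambda>i j \<gamma>. \<Sum>t\<in>A. f t i j \<gamma>) \<xi> \<zeta> = (\<Sum>t\<in>A. coeff al (f t) \<xi> \<zeta>)"
proof -
  have "coeff al (\<lambda>i j \<gamma>. \<Sum>t\<in>A. f t i j \<gamma>) \<xi> \<zeta> = (\<Sum>p\<in>supp \<zeta>. \<Sum>t\<in>A. \<Sum>q\<in>supp \<xi>.
      f t (fst p) (fst q) (gmul (snd p) (ginv al (snd q))) * \<xi> (fst q) (snd q) * cnj (\<zeta> (fst p) (snd p)))"
    unfolding coeff_supp split_def sum_distrib_right
    by (rule sum.cong[OF refl]) (rule sum.swap)
  also have "\<dots> = (\<Sum>t\<in>A. coeff al (f t) \<xi> \<zeta>)"
    unfolding coeff_supp split_def by (rule sum.swap)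
  finally show ?thesis .
qed

lemma coeff_zero: "coeff al (\<lambda>i j \<gamma>. 0) \<xi> \<zeta> = 0"
  unfolding coeff_supp by simp

lemma nrm_zero_supp: assumes "finite (supp \<xi>)" "nrm \<xi> = 0" shows "supp \<xi> = {}"
proof -
  have "\<forall>p\<in>supp \<xi>. (\<lambda>(i,\<gamma>). (cmod (\<xi> i \<gamma>))\<^sup>2) p = 0"
    using assms unfolding nrm_def by (subst sum_nonneg_eq_0_iff[symmetric]) auto
  then show ?thesis by (auto simp: supp_def)
qed

lemma coeff_empty1: "supp \<xi> = {} \<Longrightarrow> coeff al F \<xi> \<zeta> = 0"
  unfolding coeff_supp by simp
lemma coeff_empty2: "supp \<zeta> = {} \<Longrightarrow> coeff al F \<xi> \<zeta> = 0"
  unfolding coeff_supp by simp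

lemma coeff_scale: "coeff al F (\<lambda>i \<gamma>. \<xi> i \<gamma> / a) (\<lambda>i \<gamma>. \<zeta> i \<gamma> / of_real b) =
    coeff al F \<xi> \<zeta> / (a * of_real b)" if "a \<noteq> 0" "b \<noteq> 0"
proof -
  have s1: "supp (\<lambda>i \<gamma>. \<xi> i \<gamma> / a) = supp \<xi>" "supp (\<lambda>i \<gamma>. \<zeta> i \<gamma> / of_real b) = supp \<zeta>"
    using that by (auto simp: supp_def)
  show ?thesis unfolding coeff_supp s1
    by (simp add: split_def sum_divide_distrib field_simps)
qed

lemma enn_le: assumes "ennreal c \<le> M" "M \<noteq> \<infinity>" "c \<ge> 0" shows "c \<le> enn2real M"
proof -
  have "enn2real (ennreal c) \<le> enn2real M" using assms by (intro enn2real_mono) (auto simp: top.not_eq_extremum)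
  then show ?thesis using assms(3) by simp
qed

lemma coeff_scale_bound:
  assumes f1: "finite (supp \<xi>)" and f2: "finite (supp \<zeta>)"
    and s1: "\<forall>i \<gamma>. \<xi> i \<gamma> \<noteq> 0 \<longrightarrow> i < n \<and> \<gamma> \<in> fibre D y"
    and s2: "\<forall>i \<gamma>. \<zeta> i \<gamma> \<noteq> 0 \<longrightarrow> i < n \<and> \<gamma> \<in> fibre D y"
    and fin: "matnorm D al n F \<noteq> \<infinity>"
  shows "cmod (coeff al F \<xi> \<zeta>) \<le> enn2real (matnorm D al n F) * sqrt (nrm \<xi>) * sqrt (nrm \<zeta>)"
proof (cases "nrm \<xi> = 0 \<or> nrm \<zeta> = 0")
  case True
  then have "coeff al F \<xi> \<zeta> = 0"
    using nrm_zero_supp[OF f1] nrm_zero_supp[OF f2] coeff_empty1 coeff_empty2 by blast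
  then show ?thesis by (simp add: nrm_nonneg)
next
  case False
  define a where "a = sqrt (nrm \<xi>)"
  define b where "b = sqrt (nrm \<zeta>)"
  have a0: "a > 0" and b0: "b > 0" using False nrm_nonneg[of \<xi>] nrm_nonneg[of \<zeta>]
    by (auto simp: a_def b_def)
  define \<xi>1 where "\<xi>1 = (\<lambda>i \<gamma>. \<xi> i \<gamma> / of_real a)"
  define \<zeta>1 where "\<zeta>1 = (\<lambda>i \<gamma>. \<zeta> i \<gamma> / of_real b)"
  have sp1: "supp \<xi>1 = supp \<xi>" "supp \<zeta>1 = supp \<zeta>"
    using a0 b0 by (auto simp: supp_def \<xi>1_def \<zeta>1_def)
  have "nrm \<xi>1 = nrm \<xi> / a\<^sup>2"
    unfolding nrm_def sp1 by (simp add: \<xi>1_def sum_divide_distrib split_def norm_divide power_divide)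
  also have "\<dots> = 1" using a0 False by (simp add: a_def)
  finally have n1: "nrm \<xi>1 = 1" .
  have "nrm \<zeta>1 = nrm \<zeta> / b\<^sup>2"
    unfolding nrm_def sp1 by (simp add: \<zeta>1_def sum_divide_distrib split_def norm_divide power_divide)
  also have "\<dots> = 1" using b0 False by (simp add: b_def)
  finally have n2: "nrm \<zeta>1 = 1" .
  have u1: "\<xi>1 \<in> unit_vecs D n y" unfolding unit_vecs_iff sp1 using f1 s1 n1 a0
    by (auto simp: \<xi>1_def)
  have u2: "\<zeta>1 \<in> unit_vecs D n y" unfolding unit_vecs_iff sp1 using f2 s2 n2 b0
    by (auto simp: \<zeta>1_def)
  have "ennreal (cmod (coeff al F \<xi>1 \<zeta>1)) \<le> matnorm D al n F" by (rule matnorm_upper[OF u1 u2])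
  then have le: "cmod (coeff al F \<xi>1 \<zeta>1) \<le> enn2real (matnorm D al n F)"
    using fin by (intro enn_le) auto
  have "coeff al F \<xi>1 \<zeta>1 = coeff al F \<xi> \<zeta> / (of_real a * of_real b)"
    unfolding \<xi>1_def \<zeta>1_def using a0 b0 by (intro coeff_scale) auto
  then have "cmod (coeff al F \<xi> \<zeta>) = a * b * cmod (coeff al F \<xi>1 \<zeta>1)"
    using a0 b0 by (simp add: norm_divide norm_mult)
  also have "\<dots> \<le> a * b * enn2real (matnorm D al n F)"
    using le a0 b0 by (intro mult_left_mono) auto
  finally show ?thesis by (simp add: a_def b_def mult_ac)
qed

lemma eval_bound:
  assumes pa: "partial_action D al" and y: "y \<in> D (- s)"
  shows "ennreal (cmod (f (y, s))) \<le> matnorm D al 1 (\<lambda>_ _. f)"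
proof -
  define \<xi> where "\<xi> = (\<lambda>(i::nat) \<gamma>. if i = 0 \<and> \<gamma> = (y, 0::'a) then (1::complex) else 0)"
  define \<zeta> where "\<zeta> = (\<lambda>(i::nat) \<gamma>. if i = 0 \<and> \<gamma> = (y, s) then (1::complex) else 0)"
  have sp: "supp \<xi> = {(0, (y, 0))}" "supp \<zeta> = {(0, (y, s))}"
    by (auto simp: supp_def \<xi>_def \<zeta>_def)
  have u1: "\<xi> \<in> unit_vecs D 1 y" unfolding unit_vecs_iff nrm_def sp
    using pa_D0[OF pa] by (auto simp: \<xi>_def fibre_def)
  have u2: "\<zeta> \<in> unit_vecs D 1 y" unfolding unit_vecs_iff nrm_def sp
    using y by (auto simp: \<zeta>_def fibre_def)
  have "coeff al (\<lambda>_ _. f) \<xi> \<zeta> = f (y, s)"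
    unfolding coeff_supp sp by (simp add: \<xi>_def \<zeta>_def gmul_ginv pa_al0[OF pa])
  with matnorm_upper[OF u1 u2, of al "\<lambda>_ _. f"] show ?thesis by simp
qed

lemma grp1: "(a::'g::group_add) + - b = t \<Longrightarrow> a = t + b"
  by (metis add.assoc add.right_neutral left_minus)

lemma card_le1_sub: "A \<subseteq> {a} \<Longrightarrow> card A \<le> 1"
  using subset_singletonD by fastforce

lemma slice_coeff_bound:
  assumes pa: "partial_action D al"
    and ht: "\<And>\<gamma>. h \<gamma> \<noteq> 0 \<Longrightarrow> snd \<gamma> = t" and hB: "\<And>\<gamma>. cmod (h \<gamma>) \<le> B" and B0: "B \<ge> 0"
    and u1: "\<xi> \<in> unit_vecs D 1 y" and u2: "\<zeta> \<in> unit_vecs D 1 y"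
  shows "cmod (coeff al (\<lambda>_ _. h) \<xi> \<zeta>) \<le> B"
proof -
  let ?S = "supp \<zeta>" and ?R = "supp \<xi>"
  have fS: "finite ?S" and fR: "finite ?R" and nS: "nrm \<zeta> \<le> 1" and nR: "nrm \<xi> \<le> 1"
    using u1 u2 unfolding unit_vecs_iff by auto
  have inS: "fst s = 0 \<and> fst (snd s) = y" if "s \<in> ?S" for s
  proof -
    have "\<zeta> (fst s) (snd s) \<noteq> 0" using that by (simp add: supp_def split_def)
    then have "fst s < 1 \<and> snd s \<in> fibre D y" using u2 unfolding unit_vecs_iff by blast
    then show ?thesis by (simp add: fibre_def split_def)
  qed
  have inR: "fst r = 0 \<and> fst (snd r) = y" if "r \<in> ?R" for r
  proof -
    have "\<xi> (fst r) (snd r) \<noteq> 0" using that by (simp add: supp_def split_def)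
    then have "fst r < 1 \<and> snd r \<in> fibre D y" using u1 unfolding unit_vecs_iff by blast
    then show ?thesis by (simp add: fibre_def split_def)
  qed
  let ?c = "\<lambda>s r. h (gmul (snd s) (ginv al (snd r)))"
  let ?P = "\<lambda>s r. snd (snd s) = t + snd (snd r)"
  have "coeff al (\<lambda>_ _. h) \<xi> \<zeta> = (\<Sum>s\<in>?S. \<Sum>r\<in>?R. ?c s r * \<xi> (fst r) (snd r) * cnj (\<zeta> (fst s) (snd s)))"
    unfolding coeff_supp by (simp add: split_def)
  also have "cmod \<dots> \<le> B * ((\<Sum>r\<in>?R. (cmod (\<xi> (fst r) (snd r)))\<^sup>2) + (\<Sum>s\<in>?S. (cmod (cnj (\<zeta> (fst s) (snd s))))\<^sup>2)) / 2"
  proof (rule double_sum_bound[where P = ?P])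
    fix s r assume "s \<in> ?S" "r \<in> ?R" "?c s r \<noteq> 0"
    then have "snd (gmul (snd s) (ginv al (snd r))) = t" using ht by blast
    then show "?P s r" by (simp add: gmul_def ginv_def grp1)
  next
    fix r assume r: "r \<in> ?R"
    have "{s\<in>?S. ?P s r} \<subseteq> {(0, (y, t + snd (snd r)))}"
    proof
      fix s assume "s \<in> {s\<in>?S. ?P s r}"
      then have "s \<in> ?S" "?P s r" by auto
      then show "s \<in> {(0, (y, t + snd (snd r)))}" using inS[of s] by (cases s) (simp add: prod_eq_iff)
    qed
    then show "card {s\<in>?S. ?P s r} \<le> 1" by (rule card_le1_sub)
  next
    fix s assume s: "s \<in> ?S"
    have "{r\<in>?R. ?P s r} \<subseteq> {(0, (y, - t + snd (snd s)))}"
    proof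
      fix r assume "r \<in> {r\<in>?R. ?P s r}"
      then have "r \<in> ?R" "?P s r" by auto
      then show "r \<in> {(0, (y, - t + snd (snd s)))}" using inR[of r] by (cases r) (simp add: prod_eq_iff add.assoc[symmetric])
    qed
    then show "card {r\<in>?R. ?P s r} \<le> 1" by (rule card_le1_sub)
  next
    show "finite ?S" by (rule fS)
  next
    show "finite ?R" by (rule fR)
  next
    show "B \<ge> 0" by (rule B0)
  next
    fix s r show "cmod (?c s r) \<le> B" by (rule hB)
  qed
  also have "\<dots> = B * (nrm \<xi> + nrm \<zeta>) / 2"
    unfolding nrm_def split_def by simp
  also have "\<dots> \<le> B * (1 + 1) / 2"
    using nS nR B0 by (intro divide_right_mono mult_left_mono add_mono) auto
  finally show ?thesis by simp
qed

lemma slice_matnorm: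
  assumes pa: "partial_action D al"
    and ht: "\<And>\<gamma>. h \<gamma> \<noteq> 0 \<Longrightarrow> snd \<gamma> = t" and hB: "\<And>\<gamma>. cmod (h \<gamma>) \<le> B" and B0: "B \<ge> 0"
  shows "matnorm D al 1 (\<lambda>_ _. h) \<le> ennreal B"
  by (rule matnorm_le) (rule slice_coeff_bound[OF pa ht hB B0])

definition sl :: "'g \<Rightarrow> ('a \<times> 'g \<Rightarrow> complex) \<Rightarrow> ('a \<times> 'g \<Rightarrow> complex)" where
  "sl t f = (\<lambda>\<gamma>. if snd \<gamma> = t then f \<gamma> else 0)"

definition slfun :: "('g::group_add \<Rightarrow> 'a set) \<Rightarrow> 'g \<Rightarrow> ('a \<times> 'g \<Rightarrow> complex) \<Rightarrow> ('a \<Rightarrow> complex)" where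
  "slfun D s f = (\<lambda>y. if y \<in> D (- s) then f (y, s) else 0)"

lemma grpd_iff: "(x, t) \<in> grpd D \<longleftrightarrow> x \<in> D (- t)"
  by (simp add: grpd_def)

lemma Cc_bounded:
  assumes cpt: "\<forall>t. compact (D t)" and g: "Cc D g"
  shows "\<exists>F B. finite F \<and> B \<ge> 0 \<and> (\<forall>\<gamma>. g \<gamma> \<noteq> 0 \<longrightarrow> snd \<gamma> \<in> F) \<and> (\<forall>\<gamma>. cmod (g \<gamma>) \<le> B)"
proof -
  obtain F K where F: "finite F" and FK: "\<forall>x t. g (x, t) \<noteq> 0 \<longrightarrow> t \<in> F \<and> x \<in> K t"
    using g unfolding Cc_def by blast
  have z: "\<And>\<gamma>. \<gamma> \<notin> grpd D \<Longrightarrow> g \<gamma> = 0" and c: "cont_G D g" using g unfolding Cc_def by auto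
  have "\<forall>t. \<exists>b. \<forall>x\<in>D (- t). cmod (g (x, t)) \<le> b"
  proof
    fix t
    have "compact ((\<lambda>x. g (x, t)) ` D (- t))"
      using c cpt unfolding cont_G_def by (intro compact_continuous_image) auto
    then have "bounded ((\<lambda>x. g (x, t)) ` D (- t))" by (rule compact_imp_bounded)
    then show "\<exists>b. \<forall>x\<in>D (- t). cmod (g (x, t)) \<le> b" unfolding bounded_iff by auto
  qed
  then have "\<exists>b. \<forall>t. \<forall>x\<in>D (- t). cmod (g (x, t)) \<le> b t" by (rule choice)
  then obtain b where b: "\<And>t x. x \<in> D (- t) \<Longrightarrow> cmod (g (x, t)) \<le> b t" by blast
  define B where "B = (\<Sum>t\<in>F. \<bar>b t\<bar>)"
  have "cmod (g \<gamma>) \<le> B" for \<gamma>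
  proof (cases "g \<gamma> = 0")
    case True then show ?thesis by (simp add: B_def sum_nonneg)
  next
    case False
    obtain x t where \<gamma>: "\<gamma> = (x, t)" by (cases \<gamma>)
    have g0: "g (x, t) \<noteq> 0" using False unfolding \<gamma> .
    have tF: "t \<in> F" using FK g0 by simp
    have xt: "x \<in> D (- t)" using z[of "(x, t)"] g0 by (auto simp: grpd_iff)
    have "cmod (g \<gamma>) \<le> \<bar>b t\<bar>" using b[OF xt] unfolding \<gamma> by linarith
    also have "\<dots> \<le> B" unfolding B_def using F tF by (intro member_le_sum) auto
    finally show ?thesis .
  qed
  moreover have "\<forall>\<gamma>. g \<gamma> \<noteq> 0 \<longrightarrow> snd \<gamma> \<in> F"
  proof (intro allI impI)
    fix \<gamma> assume "g \<gamma> \<noteq> 0"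
    then show "snd \<gamma> \<in> F" using FK by (cases \<gamma>) simp
  qed
  moreover have "B \<ge> 0" unfolding B_def by (intro sum_nonneg) simp
  ultimately show ?thesis using F by blast
qed

lemma fin_slices_coeff_bound:
  assumes pa: "partial_action D al" and F: "finite F"
    and hF: "\<forall>\<gamma>. h \<gamma> \<noteq> 0 \<longrightarrow> snd \<gamma> \<in> F" and hB: "\<forall>\<gamma>. cmod (h \<gamma>) \<le> B" and B0: "B \<ge> 0"
    and u1: "\<xi> \<in> unit_vecs D 1 y" and u2: "\<zeta> \<in> unit_vecs D 1 y"
  shows "cmod (coeff al (\<lambda>_ _. h) \<xi> \<zeta>) \<le> real (card F) * B"
proof -
  have h: "h = (\<lambda>\<gamma>. \<Sum>t\<in>F. sl t h \<gamma>)"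
  proof
    fix \<gamma> show "h \<gamma> = (\<Sum>t\<in>F. sl t h \<gamma>)"
    proof (cases "snd \<gamma> \<in> F")
      case True then show ?thesis using F by (simp add: sl_def sum.delta')
    next
      case False then have "h \<gamma> = 0" using hF by blast
      then show ?thesis by (auto simp: sl_def intro!: sum.neutral)
    qed
  qed
  have "coeff al (\<lambda>_ _. h) \<xi> \<zeta> = coeff al (\<lambda>_ _ \<gamma>. \<Sum>t\<in>F. sl t h \<gamma>) \<xi> \<zeta>"
    by (subst h) (rule refl)
  also have "\<dots> = (\<Sum>t\<in>F. coeff al (\<lambda>_ _. sl t h) \<xi> \<zeta>)"
    by (rule coeff_sum)
  finally have eq: "coeff al (\<lambda>_ _. h) \<xi> \<zeta> = (\<Sum>t\<in>F. coeff al (\<lambda>_ _. sl t h) \<xi> \<zeta>)" .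
  have "cmod (coeff al (\<lambda>_ _. h) \<xi> \<zeta>) \<le> (\<Sum>t\<in>F. cmod (coeff al (\<lambda>_ _. sl t h) \<xi> \<zeta>))"
    unfolding eq by (rule norm_sum)
  also have "\<dots> \<le> (\<Sum>t\<in>F. B)"
  proof (rule sum_mono)
    fix t assume "t \<in> F"
    have a1: "\<And>\<gamma>. sl t h \<gamma> \<noteq> 0 \<Longrightarrow> snd \<gamma> = t" by (simp add: sl_def split: if_splits)
    have a2: "cmod (sl t h \<gamma>) \<le> B" for \<gamma> using spec[OF hB, of \<gamma>] B0 by (simp add: sl_def)
    show "cmod (coeff al (\<lambda>_ _. sl t h) \<xi> \<zeta>) \<le> B"
      by (rule slice_coeff_bound[OF pa a1 a2 B0 u1 u2])
  qed
  finally show ?thesis by simp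
qed

lemma Cc_coeff_bound:
  assumes pa: "partial_action D al" and cpt: "\<forall>t. compact (D t)" and g: "Cc D g"
  shows "\<exists>C. \<forall>y \<xi> \<zeta>. \<xi> \<in> unit_vecs D 1 y \<longrightarrow> \<zeta> \<in> unit_vecs D 1 y \<longrightarrow>
           cmod (coeff al (\<lambda>_ _. g) \<xi> \<zeta>) \<le> C"
proof -
  obtain F B where "finite F" "B \<ge> 0" "\<forall>\<gamma>. g \<gamma> \<noteq> 0 \<longrightarrow> snd \<gamma> \<in> F" "\<forall>\<gamma>. cmod (g \<gamma>) \<le> B"
    using Cc_bounded[OF cpt g] by blast
  then show ?thesis using fin_slices_coeff_bound[OF pa, of F g B] by (intro exI[of _ "real (card F) * B"]) blast
qed

lemma Cr_zero: "f \<in> Cr D al \<Longrightarrow> \<gamma> \<notin> grpd D \<Longrightarrow> f \<gamma> = 0"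
  unfolding Cr_def mem_Collect_eq by blast

lemma Cr_matnorm_fin:
  assumes pa: "partial_action D al" and cpt: "\<forall>t. compact (D t)" and f: "f \<in> Cr D al"
  shows "matnorm D al 1 (\<lambda>_ _. f) \<noteq> \<infinity>"
proof -
  have "\<forall>e>0. \<exists>g. Cc D g \<and> matnorm D al 1 (\<lambda>_ _. (\<lambda>\<gamma>. f \<gamma> - g \<gamma>)) \<le> ennreal e"
    using f unfolding Cr_def mem_Collect_eq by blast
  from this[rule_format, OF zero_less_one]
  obtain g where g: "Cc D g" and fg: "matnorm D al 1 (\<lambda>_ _. (\<lambda>\<gamma>. f \<gamma> - g \<gamma>)) \<le> ennreal 1"
    by blast
  obtain C where C: "\<And>y \<xi> \<zeta>. \<xi> \<in> unit_vecs D 1 y \<Longrightarrow> \<zeta> \<in> unit_vecs D 1 y \<Longrightarrow>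
           cmod (coeff al (\<lambda>_ _. g) \<xi> \<zeta>) \<le> C"
    using Cc_coeff_bound[OF pa cpt g] by blast
  have "matnorm D al 1 (\<lambda>_ _. f) \<le> ennreal (1 + C)"
  proof (rule matnorm_le)
    fix y \<xi> \<zeta> assume u1: "\<xi> \<in> unit_vecs D 1 y" and u2: "\<zeta> \<in> unit_vecs D 1 y"
    have "coeff al (\<lambda>_ _. f) \<xi> \<zeta> = coeff al (\<lambda>i j \<gamma>. (\<lambda>_ _ \<gamma>. f \<gamma> - g \<gamma>) i j \<gamma> + (\<lambda>_ _. g) i j \<gamma>) \<xi> \<zeta>"
      by simp
    also have "\<dots> = coeff al (\<lambda>_ _ \<gamma>. f \<gamma> - g \<gamma>) \<xi> \<zeta> + coeff al (\<lambda>_ _. g) \<xi> \<zeta>"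
      by (rule coeff_add)
    finally have e: "coeff al (\<lambda>_ _. f) \<xi> \<zeta> = coeff al (\<lambda>_ _ \<gamma>. f \<gamma> - g \<gamma>) \<xi> \<zeta> + coeff al (\<lambda>_ _. g) \<xi> \<zeta>" .
    have "ennreal (cmod (coeff al (\<lambda>_ _ \<gamma>. f \<gamma> - g \<gamma>) \<xi> \<zeta>)) \<le> ennreal 1"
      by (rule order_trans[OF matnorm_upper[OF u1 u2] fg])
    then have "cmod (coeff al (\<lambda>_ _ \<gamma>. f \<gamma> - g \<gamma>) \<xi> \<zeta>) \<le> 1" by (simp add: ennreal_le_iff)
    moreover have "cmod (coeff al (\<lambda>_ _. g) \<xi> \<zeta>) \<le> C" using C[OF u1 u2] .
    ultimately show "cmod (coeff al (\<lambda>_ _. f) \<xi> \<zeta>) \<le> 1 + C"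
      unfolding e using norm_triangle_ineq[of "coeff al (\<lambda>_ _ \<gamma>. f \<gamma> - g \<gamma>) \<xi> \<zeta>" "coeff al (\<lambda>_ _. g) \<xi> \<zeta>"] by linarith
  qed
  from neq_top_trans[OF ennreal_neq_top this] show ?thesis unfolding infinity_ennreal_def .
qed

lemma Cc_Cr: assumes g: "Cc D g" shows "g \<in> Cr D al"
proof -
  have "matnorm D al 1 (\<lambda>_ _. (\<lambda>\<gamma>. g \<gamma> - g \<gamma>)) \<le> ennreal 0"
    by (rule matnorm_le) (simp add: coeff_zero)
  then have "matnorm D al 1 (\<lambda>_ _. (\<lambda>\<gamma>. g \<gamma> - g \<gamma>)) = 0" by simp
  then have "\<forall>e>0. matnorm D al 1 (\<lambda>_ _. (\<lambda>\<gamma>. g \<gamma> - g \<gamma>)) \<le> ennreal e" by simp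
  moreover have "\<forall>\<gamma>. \<gamma> \<notin> grpd D \<longrightarrow> g \<gamma> = 0" using g unfolding Cc_def by blast
  ultimately show ?thesis using g unfolding Cr_def mem_Collect_eq by blast
qed

lemma chi_Cc: assumes cpt: "\<forall>t. compact (D t)" shows "Cc D (chi D t)"
  unfolding Cc_def
proof (intro conjI)
  show "\<forall>\<gamma>. \<gamma> \<notin> grpd D \<longrightarrow> chi D t \<gamma> = 0" by (auto simp: chi_def grpd_def)
  show "cont_G D (chi D t)" unfolding cont_G_def
  proof
    fix s
    show "continuous_on (D (- s)) (\<lambda>x. chi D t (x, s))"
    proof (cases "s = t")
      case True
      have "continuous_on (D (- s)) (\<lambda>x. (1::complex))" by simp
      then show ?thesis by (rule continuous_on_cong[THEN iffD2, OF refl, rotated]) (simp add: chi_def True)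
    next
      case False
      then show ?thesis by (simp add: chi_def)
    qed
  qed
  show "\<exists>F K. finite F \<and> (\<forall>t\<in>F. compact (K t) \<and> K t \<subseteq> D (- t)) \<and>
        (\<forall>x ta. chi D t (x, ta) \<noteq> 0 \<longrightarrow> ta \<in> F \<and> x \<in> K ta)"
    using cpt by (intro exI[of _ "{t}"] exI[of _ "\<lambda>s. D (- s)"]) (auto simp: chi_def)
qed

lemma chi_matnorm: assumes pa: "partial_action D al" shows "matnorm D al 1 (\<lambda>_ _. chi D t) \<le> 1"
proof -
  have a1: "snd \<gamma> = t" if "chi D t \<gamma> \<noteq> 0" for \<gamma> using that by (cases \<gamma>) (simp add: chi_def split: if_splits)
  have a2: "cmod (chi D t \<gamma>) \<le> 1" for \<gamma> by (cases \<gamma>) (simp add: chi_def)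
  show ?thesis using slice_matnorm[OF pa a1 a2] by simp
qed

lemma Cr_cont:
  assumes pa: "partial_action D al" and f: "f \<in> Cr D al"
  shows "continuous_on (D (- t)) (\<lambda>x. f (x, t))"
proof -
  have "\<forall>n. \<exists>g. Cc D g \<and> matnorm D al 1 (\<lambda>_ _. (\<lambda>\<gamma>. f \<gamma> - g \<gamma>)) \<le> ennreal (1 / Suc n)"
    using f unfolding Cr_def by auto
  then obtain G where G: "\<And>n. Cc D (G n)"
    and GM: "\<And>n. matnorm D al 1 (\<lambda>_ _. (\<lambda>\<gamma>. f \<gamma> - G n \<gamma>)) \<le> ennreal (1 / Suc n)"
    by metis
  have bd: "cmod (f (x, t) - G n (x, t)) \<le> 1 / Suc n" if "x \<in> D (- t)" for x n
  proof -
    have "ennreal (cmod ((\<lambda>\<gamma>. f \<gamma> - G n \<gamma>) (x, t))) \<le> ennreal (1 / Suc n)"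
      by (rule order_trans[OF eval_bound[OF pa that] GM])
    then show ?thesis by (simp add: ennreal_le_iff)
  qed
  show ?thesis
  proof (rule uniform_limit_theorem)
    show "\<forall>\<^sub>F n in sequentially. continuous_on (D (- t)) ((\<lambda>n x. G n (x, t)) n)"
      using G unfolding Cc_def cont_G_def by simp
    show "uniform_limit (D (- t)) (\<lambda>n x. G n (x, t)) (\<lambda>x. f (x, t)) sequentially"
    proof (rule uniform_limitI)
      fix e :: real assume e: "e > 0"
      obtain N where N: "inverse (real (Suc N)) < e" using reals_Archimedean[OF e] by blast
      show "\<forall>\<^sub>F n in sequentially. \<forall>x\<in>D (- t). dist (G n (x, t)) (f (x, t)) < e"
        unfolding eventually_sequentially
      proof (intro exI[of _ N] allI impI ballI)
        fix n x assume n: "N \<le> n" and x: "x \<in> D (- t)"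
        have "dist (G n (x, t)) (f (x, t)) = cmod (f (x, t) - G n (x, t))" by (simp add: dist_norm norm_minus_commute)
        also have "\<dots> \<le> 1 / Suc n" by (rule bd[OF x])
        also have "\<dots> \<le> inverse (real (Suc N))" using n by (simp add: field_simps)
        finally show "dist (G n (x, t)) (f (x, t)) < e" using N by simp
      qed
    qed
  qed simp
qed

lemma sl_Cc:
  assumes pa: "partial_action D al" and cpt: "\<forall>t. compact (D t)" and f: "f \<in> Cr D al"
  shows "Cc D (sl s f)"
  unfolding Cc_def
proof (intro conjI)
  show "\<forall>\<gamma>. \<gamma> \<notin> grpd D \<longrightarrow> sl s f \<gamma> = 0" using Cr_zero[OF f] by (auto simp: sl_def)
  show "cont_G D (sl s f)" unfolding cont_G_def
  proof
    fix t
    show "continuous_on (D (- t)) (\<lambda>x. sl s f (x, t))"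
      using Cr_cont[OF pa f, of t] by (cases "t = s") (auto simp: sl_def)
  qed
  show "\<exists>F K. finite F \<and> (\<forall>t\<in>F. compact (K t) \<and> K t \<subseteq> D (- t)) \<and>
        (\<forall>x t. sl s f (x, t) \<noteq> 0 \<longrightarrow> t \<in> F \<and> x \<in> K t)"
    using cpt Cr_zero[OF f] by (intro exI[of _ "{s}"] exI[of _ "\<lambda>s. D (- s)"]) (auto simp: sl_def grpd_def)
qed

lemma sl_ract:
  assumes f: "f \<in> Cr D al"
  shows "sl s f = ract (chi D s) (slfun D s f)"
proof
  fix \<gamma> :: "'a \<times> 'b"
  obtain x t where \<gamma>: "\<gamma> = (x, t)" by (cases \<gamma>)
  show "sl s f \<gamma> = ract (chi D s) (slfun D s f) \<gamma>"
    using Cr_zero[OF f, of "(x, s)"] unfolding \<gamma>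
    by (auto simp: sl_def ract_def chi_def slfun_def grpd_def)
qed

lemma slfun_C0:
  assumes pa: "partial_action D al" and cpt: "\<forall>t. compact (D (t::'g::group_add)) " and f: "f \<in> Cr D al"
  shows "C0 (slfun D s f :: 'a::t2_space \<Rightarrow> complex)"
  unfolding C0_def
proof (intro conjI)
  have cl: "closed (D (- s))" using cpt by (simp add: compact_imp_closed)
  have op: "open (D (- s))" using pa_open[OF pa] .
  have "continuous_on (D (- s) \<union> (- D (- s))) (\<lambda>y. if y \<in> D (- s) then f (y, s) else 0)"
    by (rule continuous_on_cases) (use cl op Cr_cont[OF pa f, of s] in auto)
  then show "continuous_on UNIV (slfun D s f)" by (simp add: slfun_def)
  show "\<forall>e>0. \<exists>K. compact K \<and> (\<forall>x. x \<notin> K \<longrightarrow> cmod (slfun D s f x) < e)"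
  proof (intro allI impI exI[of _ UNIV] conjI)
    show "compact (UNIV :: 'a set)" using cpt pa_D0[OF pa] by metis
  qed simp
qed

lemma infsum_delta: assumes "a \<in> A" shows "infsum (\<lambda>\<eta>. if \<eta> = a then c else 0) A = c"
proof -
  have "infsum (\<lambda>\<eta>. if \<eta> = a then c else 0) A = infsum (\<lambda>\<eta>. if \<eta> = a then c else 0) {a}"
    by (rule infsum_cong_neutral) (use assms in auto)
  then show ?thesis by simp
qed

lemma ainner_eq:
  assumes pa: "partial_action D al"
  shows "Econd (conv D al (star al g) f) x = infsum (\<lambda>\<eta>. cnj (g \<eta>) * f \<eta>) (fibre D x)"
  unfolding Econd_def conv_def
proof (simp, rule infsum_cong)
  fix \<eta> assume "\<eta> \<in> fibre D x"
  then obtain s where \<eta>: "\<eta> = (x, s)" and xs: "x \<in> D (- s)" by (auto simp: fibre_def)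
  show "star al g (gmul (x, 0) (ginv al \<eta>)) * f \<eta> = cnj (g \<eta>) * f \<eta>"
    unfolding \<eta> using pa_inv[OF pa xs] by (simp add: star_def gmul_def ginv_def)
qed

lemma ainner_chi_right:
  assumes pa: "partial_action D al" and x: "x \<in> D (- t)"
  shows "Econd (conv D al (star al g) (chi D t)) x = cnj (g (x, t))"
proof -
  have "Econd (conv D al (star al g) (chi D t)) x = infsum (\<lambda>\<eta>. if \<eta> = (x, t) then cnj (g (x, t)) else 0) (fibre D x)"
    unfolding ainner_eq[OF pa] by (rule infsum_cong) (auto simp: chi_def fibre_def split: if_splits)
  also have "\<dots> = cnj (g (x, t))" by (rule infsum_delta) (use x in \<open>auto simp: fibre_def\<close>)
  finally show ?thesis .
qed

lemma ainner_chi_left: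
  assumes pa: "partial_action D al" and x: "x \<in> D (- t)"
  shows "Econd (conv D al (star al (chi D t)) f) x = f (x, t)"
proof -
  have "Econd (conv D al (star al (chi D t)) f) x = infsum (\<lambda>\<eta>. if \<eta> = (x, t) then f (x, t) else 0) (fibre D x)"
    unfolding ainner_eq[OF pa] by (rule infsum_cong) (auto simp: chi_def fibre_def split: if_splits)
  also have "\<dots> = f (x, t)" by (rule infsum_delta) (use x in \<open>auto simp: fibre_def\<close>)
  finally show ?thesis .
qed

lemma phiT_eq:
  assumes pa: "partial_action D al" and x: "x \<in> D (- t)"
  shows "phiT D al T (x, t) = T (chi D t) (x, t)"
  using ainner_chi_left[OF pa x] x by (simp add: phiT_def grpd_def)

lemma phiT_zero: "(x, t) \<notin> grpd D \<Longrightarrow> phiT D al T (x, t) = 0"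
  by (simp add: phiT_def)

lemma rnorm_nonneg: "rnorm D al f \<ge> 0"
  by (simp add: rnorm_def)

lemma opnorm_ge:
  assumes T: "bounded_Alinear D al T" and f: "f \<in> Cr D al" and f1: "rnorm D al f \<le> 1"
  shows "rnorm D al (T f) \<le> opnorm D al T"
proof -
  obtain C where C: "\<forall>f\<in>Cr D al. rnorm D al (T f) \<le> C * rnorm D al f"
    using T unfolding bounded_Alinear_def by blast
  have bdd: "bdd_above {rnorm D al (T f) | f. f \<in> Cr D al \<and> rnorm D al f \<le> 1}"
  proof (rule bdd_aboveI)
    fix r assume "r \<in> {rnorm D al (T f) | f. f \<in> Cr D al \<and> rnorm D al f \<le> 1}"
    then obtain f where f: "f \<in> Cr D al" "rnorm D al f \<le> 1" and r: "r = rnorm D al (T f)" by blast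
    have "r \<le> C * rnorm D al f" using C f r by blast
    also have "\<dots> \<le> \<bar>C\<bar> * rnorm D al f" by (intro mult_right_mono) (auto simp: rnorm_nonneg)
    also have "\<dots> \<le> \<bar>C\<bar> * 1" using f(2) by (intro mult_left_mono) auto
    finally show "r \<le> \<bar>C\<bar>" by simp
  qed
  show ?thesis unfolding opnorm_def by (rule cSup_upper[OF _ bdd]) (use f f1 in blast)
qed

lemma Tchi_Cr:
  assumes cpt: "\<forall>t. compact (D t)" and T: "bounded_Alinear D al T"
  shows "T (chi D t) \<in> Cr D al"
  using T Cc_Cr[OF chi_Cc[OF cpt]] unfolding bounded_Alinear_def by blast

lemma phiT_bound:
  assumes pa: "partial_action D al" and cpt: "\<forall>t. compact (D t)" and T: "bounded_Alinear D al T"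
  shows "cmod (phiT D al T (x, t)) \<le> opnorm D al T"
proof -
  have r1: "rnorm D al (chi D s) \<le> 1" for s
  proof -
    have "enn2real (matnorm D al 1 (\<lambda>_ _. chi D s)) \<le> enn2real 1"
      by (rule enn2real_mono[OF chi_matnorm[OF pa]]) simp
    then show ?thesis by (simp add: rnorm_def)
  qed
  have op: "rnorm D al (T (chi D s)) \<le> opnorm D al T" for s
    by (rule opnorm_ge[OF T Cc_Cr[OF chi_Cc[OF cpt]] r1])
  show ?thesis
  proof (cases "x \<in> D (- t)")
    case True
    have "ennreal (cmod (T (chi D t) (x, t))) \<le> matnorm D al 1 (\<lambda>_ _. T (chi D t))"
      by (rule eval_bound[OF pa True])
    then have "cmod (T (chi D t) (x, t)) \<le> rnorm D al (T (chi D t))"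
      unfolding rnorm_def by (rule enn_le) (use Cr_matnorm_fin[OF pa cpt Tchi_Cr[OF cpt T]] in auto)
    then show ?thesis using op[of t] phiT_eq[OF pa True] by simp
  next
    case False
    then have "phiT D al T (x, t) = 0" by (intro phiT_zero) (simp add: grpd_iff)
    then show ?thesis using op[of t] rnorm_nonneg[of D al "T (chi D t)"] by simp
  qed
qed

lemma phiT_cont:
  assumes pa: "partial_action D al" and cpt: "\<forall>t. compact (D t)" and T: "bounded_Alinear D al T"
  shows "cont_G D (phiT D al T)"
  unfolding cont_G_def
proof
  fix t
  have "continuous_on (D (- t)) (\<lambda>x. T (chi D t) (x, t))"
    by (rule Cr_cont[OF pa Tchi_Cr[OF cpt T]])
  then show "continuous_on (D (- t)) (\<lambda>x. phiT D al T (x, t))"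
    by (rule continuous_on_cong[THEN iffD2, OF refl, rotated]) (simp add: phiT_eq[OF pa])
qed

lemma part1:
  assumes pa: "partial_action D al" and cpt: "\<forall>t. compact (D t)" and T: "bounded_Alinear D al T"
  shows "Cb D (phiT D al T) \<and> (SUP \<gamma>\<in>grpd D. cmod (phiT D al T \<gamma>)) \<le> opnorm D al T"
proof
  have z: "\<forall>\<gamma>. \<gamma> \<notin> grpd D \<longrightarrow> phiT D al T \<gamma> = 0"
    by (auto simp: phiT_def)
  have b: "\<And>\<gamma>. cmod (phiT D al T \<gamma>) \<le> opnorm D al T"
    using phiT_bound[OF pa cpt T] by (metis prod.collapse)
  show "Cb D (phiT D al T)" unfolding Cb_def using z phiT_cont[OF pa cpt T] b by blast
  have ne: "grpd D \<noteq> {}"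
  proof -
    have "(undefined, 0) \<in> grpd D" using pa_D0[OF pa] by (simp add: grpd_iff)
    then show ?thesis by blast
  qed
  show "(SUP \<gamma>\<in>grpd D. cmod (phiT D al T \<gamma>)) \<le> opnorm D al T"
    by (rule cSUP_least[OF ne b])
qed

lemma infsum_sum_fin:
  fixes f :: "'i \<Rightarrow> 'x \<Rightarrow> complex"
  assumes "finite A" "\<And>a. a \<in> A \<Longrightarrow> f a summable_on S"
  shows "infsum (\<lambda>\<eta>. \<Sum>a\<in>A. f a \<eta>) S = (\<Sum>a\<in>A. infsum (f a) S) \<and> (\<lambda>\<eta>. \<Sum>a\<in>A. f a \<eta>) summable_on S"
  using assms
proof (induction A rule: finite_induct)
  case empty then show ?case by simp
next
  case (insert a A)
  have s1: "f a summable_on S" using insert by simp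
  have s2: "(\<lambda>\<eta>. \<Sum>a\<in>A. f a \<eta>) summable_on S" and e2: "infsum (\<lambda>\<eta>. \<Sum>a\<in>A. f a \<eta>) S = (\<Sum>a\<in>A. infsum (f a) S)"
    using insert by auto
  have "infsum (\<lambda>\<eta>. \<Sum>a\<in>insert a A. f a \<eta>) S = infsum (\<lambda>\<eta>. f a \<eta> + (\<Sum>a\<in>A. f a \<eta>)) S"
    using insert(1,2) by simp
  also have "\<dots> = infsum (f a) S + infsum (\<lambda>\<eta>. \<Sum>a\<in>A. f a \<eta>) S" by (rule infsum_add[OF s1 s2])
  finally have "infsum (\<lambda>\<eta>. \<Sum>a\<in>insert a A. f a \<eta>) S = (\<Sum>a\<in>insert a A. infsum (f a) S)"
    using insert(1,2) e2 by simp
  moreover have "(\<lambda>\<eta>. \<Sum>a\<in>insert a A. f a \<eta>) summable_on S"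
    using summable_on_add[OF s1 s2] insert(1,2) by simp
  ultimately show ?case by blast
qed

lemma l2_bound:
  fixes f :: "'a::topological_space \<times> 'g::group_add \<Rightarrow> complex"
  assumes pa: "partial_action D al" and fin: "matnorm D al 1 (\<lambda>_ _. f) \<noteq> \<infinity>"
    and S: "finite S" "S \<subseteq> fibre D y"
  shows "(\<Sum>\<eta>\<in>S. (cmod (f \<eta>))\<^sup>2) \<le> (enn2real (matnorm D al 1 (\<lambda>_ _. f)))\<^sup>2"
proof -
  define M where "M = enn2real (matnorm D al 1 (\<lambda>_ _. f))"
  define \<xi> where "\<xi> = (\<lambda>(i::nat) (\<gamma>::'a \<times> 'g). if i = 0 \<and> \<gamma> = (y, 0) then (1::complex) else 0)"
  define \<zeta> where "\<zeta> = (\<lambda>(i::nat) (\<gamma>::'a \<times> 'g). if i = 0 \<and> \<gamma> \<in> S then f \<gamma> else 0)"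
  define Q where "Q = (\<Sum>\<eta>\<in>S. (cmod (f \<eta>))\<^sup>2)"
  have spx: "supp \<xi> = {(0, (y, 0))}" by (auto simp: supp_def \<xi>_def)
  have spz: "supp \<zeta> \<subseteq> (\<lambda>\<gamma>. (0, \<gamma>)) ` S" by (auto simp: supp_def \<zeta>_def)
  have fz: "finite ((\<lambda>\<gamma>. (0::nat, \<gamma>)) ` S)" using S by simp
  have inj: "inj_on (\<lambda>\<gamma>. (0::nat, \<gamma>)) S" by (auto simp: inj_on_def)
  have nx: "nrm \<xi> = 1" unfolding nrm_def spx by (simp add: \<xi>_def)
  have nz: "nrm \<zeta> = Q" unfolding nrm_superset[OF fz spz] Q_def
    by (simp add: sum.reindex[OF inj] \<zeta>_def)
  have "coeff al (\<lambda>_ _. f) \<xi> \<zeta> = (\<Sum>(i, \<gamma>)\<in>(\<lambda>\<gamma>. (0, \<gamma>)) ` S. \<Sum>(j, \<eta>)\<in>{(0, (y, 0))}.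
        f (gmul \<gamma> (ginv al \<eta>)) * \<xi> j \<eta> * cnj (\<zeta> i \<gamma>))"
    by (rule coeff_superset[OF fz spz]) (auto simp: spx)
  also have "\<dots> = (\<Sum>\<gamma>\<in>S. f (gmul \<gamma> (ginv al (y, 0))) * cnj (f \<gamma>))"
    by (simp add: sum.reindex[OF inj] \<xi>_def \<zeta>_def)
  also have "\<dots> = (\<Sum>\<gamma>\<in>S. of_real ((cmod (f \<gamma>))\<^sup>2))"
  proof (rule sum.cong[OF refl])
    fix \<gamma> assume "\<gamma> \<in> S"
    then have "fst \<gamma> = y" using S by (auto simp: fibre_def)
    then have "gmul \<gamma> (ginv al (y, 0)) = \<gamma>" using pa_al0[OF pa] by (cases \<gamma>) (simp add: gmul_ginv)
    then show "f (gmul \<gamma> (ginv al (y, 0))) * cnj (f \<gamma>) = of_real ((cmod (f \<gamma>))\<^sup>2)"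
      using complex_norm_square[of "f \<gamma>"] by simp
  qed
  finally have c: "coeff al (\<lambda>_ _. f) \<xi> \<zeta> = of_real Q" by (simp add: Q_def)
  have Q0: "Q \<ge> 0" unfolding Q_def by (intro sum_nonneg) simp
  have sx: "\<forall>i \<gamma>. \<xi> i \<gamma> \<noteq> 0 \<longrightarrow> i < 1 \<and> \<gamma> \<in> fibre D y"
    using pa_D0[OF pa] by (auto simp: \<xi>_def fibre_def)
  have sz: "\<forall>i \<gamma>. \<zeta> i \<gamma> \<noteq> 0 \<longrightarrow> i < 1 \<and> \<gamma> \<in> fibre D y"
    using S by (auto simp: \<zeta>_def split: if_splits)
  have fx: "finite (supp \<xi>)" using spx by simp
  have fz2: "finite (supp \<zeta>)" using finite_subset[OF spz fz] .
  have "cmod (coeff al (\<lambda>_ _. f) \<xi> \<zeta>) \<le> M * sqrt (nrm \<xi>) * sqrt (nrm \<zeta>)"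
    unfolding M_def by (rule coeff_scale_bound[OF fx fz2 sx sz fin])
  then have le: "Q \<le> M * sqrt Q" using c nx nz Q0 by simp
  show ?thesis
  proof (cases "Q = 0")
    case True then show ?thesis by (simp add: Q_def[symmetric])
  next
    case False
    then have "sqrt Q > 0" using Q0 by simp
    have h: "sqrt Q * sqrt Q \<le> M * sqrt Q" using le Q0 by simp
    have "sqrt Q \<le> M" using mult_right_le_imp_le[OF h \<open>sqrt Q > 0\<close>] .
    then have "(sqrt Q)\<^sup>2 \<le> M\<^sup>2" using \<open>sqrt Q > 0\<close> by (intro power_mono) auto
    then have "Q \<le> M\<^sup>2" using Q0 by simp
    then show ?thesis unfolding Q_def M_def .
  qed
qed

lemma Cr_sq_summable:
  assumes pa: "partial_action D al" and cpt: "\<forall>t. compact (D t)" and f: "f \<in> Cr D al"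
  shows "(\<lambda>\<eta>. (cmod (f \<eta>))\<^sup>2) summable_on fibre D y"
proof (rule nonneg_bdd_above_summable_on)
  show "bdd_above (sum (\<lambda>\<eta>. (cmod (f \<eta>))\<^sup>2) ` {F. F \<subseteq> fibre D y \<and> finite F})"
    using l2_bound[OF pa Cr_matnorm_fin[OF pa cpt f]] by (intro bdd_aboveI) auto
qed simp

lemma Cr_prod_summable:
  assumes pa: "partial_action D al" and cpt: "\<forall>t. compact (D t)" and f: "f \<in> Cr D al" and g: "g \<in> Cr D al"
  shows "(\<lambda>\<eta>. cnj (f \<eta>) * g \<eta>) summable_on fibre D y"
proof (rule abs_summable_summable)
  have s: "(\<lambda>\<eta>. (cmod (f \<eta>))\<^sup>2 + (cmod (g \<eta>))\<^sup>2) summable_on fibre D y"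
    by (rule summable_on_add[OF Cr_sq_summable[OF pa cpt f] Cr_sq_summable[OF pa cpt g]])
  show "(\<lambda>\<eta>. norm (cnj (f \<eta>) * g \<eta>)) summable_on fibre D y"
  proof (rule summable_on_comparison_test[OF s])
    fix \<eta>
    have "norm (cnj (f \<eta>) * g \<eta>) = cmod (f \<eta>) * cmod (g \<eta>)" by (simp add: norm_mult)
    also have "\<dots> \<le> (cmod (f \<eta>))\<^sup>2 + (cmod (g \<eta>))\<^sup>2"
    proof -
      have p: "0 \<le> cmod (f \<eta>) * cmod (g \<eta>)" by simp
      have q: "2 * cmod (f \<eta>) * cmod (g \<eta>) \<le> (cmod (f \<eta>))\<^sup>2 + (cmod (g \<eta>))\<^sup>2"
        by (rule sum_squares_bound)
      show ?thesis using p q by linarith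
    qed
    finally show "norm (cnj (f \<eta>) * g \<eta>) \<le> (cmod (f \<eta>))\<^sup>2 + (cmod (g \<eta>))\<^sup>2" .
  qed simp
qed

lemma span_zero:
  assumes "in_span_A_chi D f"
  shows "\<exists>F. finite F \<and> (\<forall>x t. t \<notin> F \<longrightarrow> f (x, t) = 0)"
proof -
  obtain F a where F: "finite F" and f: "f = (\<lambda>\<gamma>. \<Sum>t\<in>F. ract (chi D t) (a t) \<gamma>)"
    using assms unfolding in_span_A_chi_def by blast
  have "f (x, t) = 0" if "t \<notin> F" for x t
    unfolding f using that by (intro sum.neutral) (auto simp: ract_def chi_def)
  then show ?thesis using F by blast
qed

lemma Ainner_eq': "partial_action D al \<Longrightarrow> Ainner D al g f x = infsum (\<lambda>\<eta>. cnj (g \<eta>) * f \<eta>) (fibre D x)"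
  unfolding Ainner_def by (rule ainner_eq)

lemma part2_Cc:
  assumes pa: "partial_action D al" and cpt: "\<forall>t. compact (D t)" and T: "bounded_Alinear D al T"
    and fr: "finite_Arank D al T" and sp: "\<forall>f\<in>Cr D al. in_span_A_chi D (T f)"
  shows "Cc D (phiT D al T)"
proof -
  obtain n :: nat and h g where hg: "\<forall>i<n. h i \<in> Cr D al \<and> g i \<in> Cr D al"
    and Tf: "\<forall>f\<in>Cr D al. T f = (\<lambda>\<gamma>. \<Sum>i<n. ract (h i) (Ainner D al (g i) f) \<gamma>)"
    using fr unfolding finite_Arank_def by blast
  have gC: "g i \<in> Cr D al" if "i < n" for i using hg that by blast
  have "\<forall>k. \<exists>F. k < n \<longrightarrow> finite F \<and> (\<forall>x t. t \<notin> F \<longrightarrow> T (g k) (x, t) = 0)"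
  proof
    fix k show "\<exists>F. k < n \<longrightarrow> finite F \<and> (\<forall>x t. t \<notin> F \<longrightarrow> T (g k) (x, t) = 0)"
    proof (cases "k < n")
      case True
      have "in_span_A_chi D (T (g k))" using sp gC[OF True] by blast
      from span_zero[OF this] show ?thesis by blast
    qed simp
  qed
  from choice[OF this] obtain FF where FF0: "\<forall>k. k < n \<longrightarrow> finite (FF k) \<and> (\<forall>x t. t \<notin> FF k \<longrightarrow> T (g k) (x, t) = 0)"
    by blast
  have FF: "finite (FF k) \<and> (\<forall>x t. t \<notin> FF k \<longrightarrow> T (g k) (x, t) = 0)" if "k < n" for k
    using FF0 that by blast
  define F where "F = (\<Union>k<n. FF k)"
  have finF: "finite F" unfolding F_def using FF by blast
  have Tval: "T f (x, t) = (\<Sum>i<n. h i (x, t) * infsum (\<lambda>\<eta>. cnj (g i \<eta>) * f \<eta>) (fibre D x))"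
    if "f \<in> Cr D al" for f x t
    using Tf that by (simp add: ract_def Ainner_eq'[OF pa])
  have zero: "phiT D al T (x, t) = 0" if tF: "t \<notin> F" for x t
  proof (cases "x \<in> D (- t)")
    case False then show ?thesis by (intro phiT_zero) (simp add: grpd_iff)
  next
    case xt: True
    define c where "c i = h i (x, t)" for i
    define A where "A i k = infsum (\<lambda>\<eta>. cnj (g i \<eta>) * g k \<eta>) (fibre D x)" for i k
    define u where "u \<eta> = (\<Sum>i<n. c i * cnj (g i \<eta>))" for \<eta>
    have sm: "(\<lambda>\<eta>. cnj (g i \<eta>) * g k \<eta>) summable_on fibre D x" if "i < n" "k < n" for i k
      by (rule Cr_prod_summable[OF pa cpt gC gC]) (use that in auto)
    have a: "(\<Sum>i<n. c i * A i k) = 0" if k: "k < n" for k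
    proof -
      have "t \<notin> FF k" using tF k unfolding F_def by blast
      then have "T (g k) (x, t) = 0" using FF[OF k] by blast
      then show ?thesis using Tval[OF gC[OF k]] by (simp add: c_def A_def)
    qed
    have ueq: "u \<eta> * cnj (u \<eta>) = (\<Sum>k<n. cnj (c k) * (\<Sum>i<n. c i * (cnj (g i \<eta>) * g k \<eta>)))" for \<eta>
    proof -
      have "u \<eta> * cnj (u \<eta>) = (\<Sum>i<n. c i * cnj (g i \<eta>)) * (\<Sum>k<n. cnj (c k) * g k \<eta>)"
        by (simp add: u_def cnj_sum)
      also have "\<dots> = (\<Sum>i<n. \<Sum>k<n. (c i * cnj (g i \<eta>)) * (cnj (c k) * g k \<eta>))"
        by (rule sum_product)
      also have "\<dots> = (\<Sum>k<n. \<Sum>i<n. (c i * cnj (g i \<eta>)) * (cnj (c k) * g k \<eta>))"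
        by (rule sum.swap)
      also have "\<dots> = (\<Sum>k<n. cnj (c k) * (\<Sum>i<n. c i * (cnj (g i \<eta>) * g k \<eta>)))"
        by (simp add: sum_distrib_left mult_ac)
      finally show ?thesis .
    qed
    have s1: "(\<lambda>\<eta>. \<Sum>i<n. c i * (cnj (g i \<eta>) * g k \<eta>)) summable_on fibre D x
          \<and> infsum (\<lambda>\<eta>. \<Sum>i<n. c i * (cnj (g i \<eta>) * g k \<eta>)) (fibre D x) = (\<Sum>i<n. c i * A i k)"
      if k: "k < n" for k
    proof -
      have "infsum (\<lambda>\<eta>. \<Sum>i<n. c i * (cnj (g i \<eta>) * g k \<eta>)) (fibre D x) =
            (\<Sum>i<n. infsum (\<lambda>\<eta>. c i * (cnj (g i \<eta>) * g k \<eta>)) (fibre D x)) \<and>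
            (\<lambda>\<eta>. \<Sum>i<n. c i * (cnj (g i \<eta>) * g k \<eta>)) summable_on fibre D x"
        by (rule infsum_sum_fin) (use sm k in \<open>auto intro: summable_on_cmult_right\<close>)
      moreover have "infsum (\<lambda>\<eta>. c i * (cnj (g i \<eta>) * g k \<eta>)) (fibre D x) = c i * A i k" if "i < n" for i
        unfolding A_def by (rule infsum_cmult_right) (use sm that k in auto)
      ultimately show ?thesis by simp
    qed
    have "infsum (\<lambda>\<eta>. \<Sum>k<n. cnj (c k) * (\<Sum>i<n. c i * (cnj (g i \<eta>) * g k \<eta>))) (fibre D x) =
          (\<Sum>k<n. infsum (\<lambda>\<eta>. cnj (c k) * (\<Sum>i<n. c i * (cnj (g i \<eta>) * g k \<eta>))) (fibre D x)) \<and>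
          (\<lambda>\<eta>. \<Sum>k<n. cnj (c k) * (\<Sum>i<n. c i * (cnj (g i \<eta>) * g k \<eta>))) summable_on fibre D x"
      by (rule infsum_sum_fin) (use s1 in \<open>auto intro: summable_on_cmult_right\<close>)
    moreover have "infsum (\<lambda>\<eta>. cnj (c k) * (\<Sum>i<n. c i * (cnj (g i \<eta>) * g k \<eta>))) (fibre D x) = 0"
      if "k < n" for k
    proof -
      have "infsum (\<lambda>\<eta>. cnj (c k) * (\<Sum>i<n. c i * (cnj (g i \<eta>) * g k \<eta>))) (fibre D x) =
            cnj (c k) * infsum (\<lambda>\<eta>. \<Sum>i<n. c i * (cnj (g i \<eta>) * g k \<eta>)) (fibre D x)"
        by (rule infsum_cmult_right) (use s1[OF that] in blast)
      then show ?thesis using s1[OF that] a[OF that] by simp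
    qed
    ultimately have us: "infsum (\<lambda>\<eta>. u \<eta> * cnj (u \<eta>)) (fibre D x) = 0"
      and usm: "(\<lambda>\<eta>. u \<eta> * cnj (u \<eta>)) summable_on fibre D x"
      unfolding ueq by simp_all
    have "u (x, t) * cnj (u (x, t)) = 0"
    proof (rule nonneg_infsum_le_0D_complex[OF _ usm])
      show "infsum (\<lambda>\<eta>. u \<eta> * cnj (u \<eta>)) (fibre D x) \<le> 0" using us by simp
      show "(x, t) \<in> fibre D x" using xt by (simp add: fibre_def)
    qed (simp add: complex_mult_cnj less_eq_complex_def)
    then have u0: "u (x, t) = 0" by simp
    have "phiT D al T (x, t) = T (chi D t) (x, t)" by (rule phiT_eq[OF pa xt])
    also have "\<dots> = (\<Sum>i<n. h i (x, t) * Ainner D al (g i) (chi D t) x)"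
      using Tf Cc_Cr[OF chi_Cc[OF cpt]] by (simp add: ract_def)
    also have "\<dots> = u (x, t)"
      unfolding Ainner_def u_def c_def using ainner_chi_right[OF pa xt] by simp
    finally show ?thesis using u0 by simp
  qed
  show ?thesis unfolding Cc_def
  proof (intro conjI)
    show "\<forall>\<gamma>. \<gamma> \<notin> grpd D \<longrightarrow> phiT D al T \<gamma> = 0" by (auto simp: phiT_def)
    show "cont_G D (phiT D al T)" by (rule phiT_cont[OF pa cpt T])
    show "\<exists>F K. finite F \<and> (\<forall>t\<in>F. compact (K t) \<and> K t \<subseteq> D (- t)) \<and>
        (\<forall>x t. phiT D al T (x, t) \<noteq> 0 \<longrightarrow> t \<in> F \<and> x \<in> K t)"
    proof (intro exI[of _ F] exI[of _ "\<lambda>t. D (- t)"] conjI ballI allI impI)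
      fix x t assume nz: "phiT D al T (x, t) \<noteq> 0"
      show "t \<in> F" using zero nz by blast
      show "x \<in> D (- t)" using nz phiT_zero[of x t D al T] by (auto simp: grpd_iff)
    qed (use finF cpt in auto)
  qed
qed

lemma grp2: "- (l::'g::group_add) + v = k \<Longrightarrow> l = v + - k"
proof -
  assume h: "- l + v = k"
  have "v = l + k" using add_minus_cancel[of l v] h by simp
  then show "l = v + - k" by (simp add: add.assoc)
qed

lemma grp2': "(l::'g::group_add) = v + - k \<Longrightarrow> - l + v = k"
  by (simp add: minus_add add.assoc)

lemma grp3: "((u::'g::group_add) + - v = la + - lb) \<longleftrightarrow> (- la + u = - lb + v)"
proof
  assume h: "u + - v = la + - lb"
  have "u = la + (- lb + v)"
  proof -
    have "u = u + - v + v" by (simp add: add.assoc)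
    also have "\<dots> = la + - lb + v" using h by simp
    finally show ?thesis by (simp add: add.assoc diff_conv_add_uminus del: add_uminus_conv_diff)
  qed
  then show "- la + u = - lb + v" by simp
next
  assume h: "- la + u = - lb + v"
  have "u = la + (- lb + v)" using h add_minus_cancel[of la u] by simp
  then show "u + - v = la + - lb" by (simp add: add.assoc diff_conv_add_uminus del: add_uminus_conv_diff)
qed

lemma group_pairs:
  assumes fS: "finite S" and fR: "finite R" and fK: "finite K" and sub: "kf ` S \<subseteq> K"
  shows "(\<Sum>s\<in>S. \<Sum>r\<in>R. if kf s = kr r then X s r else 0) =
         (\<Sum>k\<in>K. \<Sum>s\<in>{s\<in>S. kf s = k}. \<Sum>r\<in>{r\<in>R. kr r = k}. X s r)"
proof -
  have "(\<Sum>k\<in>K. \<Sum>s\<in>{s\<in>S. kf s = k}. \<Sum>r\<in>{r\<in>R. kr r = k}. X s r) =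
        (\<Sum>k\<in>K. \<Sum>s\<in>{s\<in>S. kf s = k}. \<Sum>r\<in>R. if kf s = kr r then X s r else 0)"
  proof (rule sum.cong[OF refl], rule sum.cong[OF refl])
    fix k s assume "s \<in> {s\<in>S. kf s = k}"
    then have "kf s = k" by simp
    then show "(\<Sum>r\<in>{r\<in>R. kr r = k}. X s r) = (\<Sum>r\<in>R. if kf s = kr r then X s r else 0)"
      using fR by (simp add: sum.inter_filter eq_commute)
  qed
  also have "\<dots> = (\<Sum>s\<in>S. \<Sum>r\<in>R. if kf s = kr r then X s r else 0)"
    by (rule sum.group[OF fS fK sub])
  finally show ?thesis by simp
qed

lemma sqrt_amgm: "a \<ge> 0 \<Longrightarrow> b \<ge> 0 \<Longrightarrow> sqrt a * sqrt b \<le> (a + b) / 2"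
  using sum_squares_bound[of "sqrt a" "sqrt b"] by simp

definition vk :: "(nat \<Rightarrow> nat) \<Rightarrow> (nat \<Rightarrow> 'g::group_add) \<Rightarrow> nat \<Rightarrow> (nat \<Rightarrow> 'a \<times> 'g \<Rightarrow> complex) \<Rightarrow> 'g \<Rightarrow> (nat \<Rightarrow> 'a \<times> 'g \<Rightarrow> complex)" where
  "vk idx lab m w k = (\<lambda>j \<eta>. \<Sum>a\<in>{a. a < m \<and> idx a = j \<and> lab a = snd \<eta> + - k}. w a \<eta>)"

definition kf :: "(nat \<Rightarrow> 'g::group_add) \<Rightarrow> nat \<times> ('a \<times> 'g) \<Rightarrow> 'g" where
  "kf lab p = - lab (fst p) + snd (snd p)"

definition ee :: "(nat \<Rightarrow> nat) \<Rightarrow> nat \<times> 'b \<Rightarrow> nat \<times> 'b" where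
  "ee idx p = (idx (fst p), snd p)"

context
  fixes idx :: "nat \<Rightarrow> nat" and lab :: "nat \<Rightarrow> 'g::group_add" and m n :: nat
    and D :: "'g \<Rightarrow> 'a::topological_space set" and y :: 'a
  assumes idx: "\<And>a. a < m \<Longrightarrow> idx a < n"
    and inj: "inj_on (\<lambda>a. (idx a, lab a)) {..<m}"
begin

lemma W_prop:
  assumes w: "w \<in> unit_vecs D m y" and p: "p \<in> supp w"
  shows "fst p < m \<and> snd p \<in> fibre D y"
proof -
  have "w (fst p) (snd p) \<noteq> 0" using p by (simp add: supp_def split_def)
  then show ?thesis using w unfolding unit_vecs_iff by blast
qed

lemma Wk_lab:
  assumes "kf lab p = k" shows "lab (fst p) = snd (snd p) + - k"
  using assms grp2 unfolding kf_def by blast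

lemma vk_sub:
  assumes w: "w \<in> unit_vecs D m y"
  shows "supp (vk idx lab m w k) \<subseteq> ee idx ` {p \<in> supp w. kf lab p = k}"
proof
  fix q assume "q \<in> supp (vk idx lab m w k)"
  then obtain j \<eta> where q: "q = (j, \<eta>)" and nz: "vk idx lab m w k j \<eta> \<noteq> 0"
    by (auto simp: supp_def)
  then obtain a where a: "a \<in> {a. a < m \<and> idx a = j \<and> lab a = snd \<eta> + - k}" and wa: "w a \<eta> \<noteq> 0"
    unfolding vk_def by (meson sum.not_neutral_contains_not_neutral)
  have "(a, \<eta>) \<in> {p \<in> supp w. kf lab p = k}"
    using a wa grp2'[of "lab a" "snd \<eta>" k] by (simp add: supp_def kf_def)
  moreover have "q = ee idx (a, \<eta>)" using q a by (simp add: ee_def)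
  ultimately show "q \<in> ee idx ` {p \<in> supp w. kf lab p = k}" by blast
qed

lemma vk_inj:
  assumes w: "w \<in> unit_vecs D m y"
  shows "inj_on (ee idx) {p \<in> supp w. kf lab p = k}"
proof (rule inj_onI)
  fix p p' assume p: "p \<in> {p \<in> supp w. kf lab p = k}" and p': "p' \<in> {p \<in> supp w. kf lab p = k}"
    and e: "ee idx p = ee idx p'"
  have m1: "fst p < m" and m2: "fst p' < m" using W_prop[OF w] p p' by auto
  have l1: "lab (fst p) = snd (snd p) + - k" by (rule Wk_lab) (use p in simp)
  have l2: "lab (fst p') = snd (snd p') + - k" by (rule Wk_lab) (use p' in simp)
  have l: "lab (fst p) = lab (fst p')" using l1 l2 e by (simp add: ee_def)
  have "idx (fst p) = idx (fst p')" and s: "snd p = snd p'" using e by (auto simp: ee_def)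
  then have "fst p = fst p'" using inj m1 m2 l unfolding inj_on_def by blast
  then show "p = p'" using s by (simp add: prod_eq_iff)
qed

lemma vk_val:
  assumes w: "w \<in> unit_vecs D m y" and p: "p \<in> {p \<in> supp w. kf lab p = k}"
  shows "vk idx lab m w k (idx (fst p)) (snd p) = w (fst p) (snd p)"
proof -
  have m1: "fst p < m" using W_prop[OF w] p by auto
  have l: "lab (fst p) = snd (snd p) + - k" by (rule Wk_lab) (use p in simp)
  have "{a. a < m \<and> idx a = idx (fst p) \<and> lab a = snd (snd p) + - k} = {fst p}"
  proof
    show "{fst p} \<subseteq> {a. a < m \<and> idx a = idx (fst p) \<and> lab a = snd (snd p) + - k}" using m1 l by simp
    show "{a. a < m \<and> idx a = idx (fst p) \<and> lab a = snd (snd p) + - k} \<subseteq> {fst p}"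
    proof
      fix a assume "a \<in> {a. a < m \<and> idx a = idx (fst p) \<and> lab a = snd (snd p) + - k}"
      then have "a < m" "idx a = idx (fst p)" "lab a = lab (fst p)" using l by auto
      then have "a = fst p" using inj m1 unfolding inj_on_def by blast
      then show "a \<in> {fst p}" by simp
    qed
  qed
  then show ?thesis unfolding vk_def by simp
qed

lemma vk_props:
  assumes w: "w \<in> unit_vecs D m y"
  shows "finite (supp (vk idx lab m w k)) \<and> (\<forall>j \<eta>. vk idx lab m w k j \<eta> \<noteq> 0 \<longrightarrow> j < n \<and> \<eta> \<in> fibre D y)"
proof
  have fw: "finite (supp w)" using w unfolding unit_vecs_iff by blast
  show "finite (supp (vk idx lab m w k))"
    by (rule finite_subset[OF vk_sub[OF w]]) (use fw in auto)
  show "\<forall>j \<eta>. vk idx lab m w k j \<eta> \<noteq> 0 \<longrightarrow> j < n \<and> \<eta> \<in> fibre D y"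
  proof (intro allI impI)
    fix j \<eta> assume "vk idx lab m w k j \<eta> \<noteq> 0"
    then have "(j, \<eta>) \<in> ee idx ` {p \<in> supp w. kf lab p = k}" using vk_sub[OF w] by (auto simp: supp_def)
    then obtain p where p: "p \<in> supp w" and e: "(j, \<eta>) = ee idx p" by blast
    show "j < n \<and> \<eta> \<in> fibre D y" using W_prop[OF w p] idx e by (auto simp: ee_def)
  qed
qed

lemma vk_nrm:
  assumes w: "w \<in> unit_vecs D m y"
  shows "nrm (vk idx lab m w k) = (\<Sum>p\<in>{p \<in> supp w. kf lab p = k}. (cmod (w (fst p) (snd p)))\<^sup>2)"
proof -
  have fw: "finite (supp w)" using w unfolding unit_vecs_iff by blast
  have fi: "finite (ee idx ` {p \<in> supp w. kf lab p = k})" using fw by auto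
  have "nrm (vk idx lab m w k) = (\<Sum>q\<in>ee idx ` {p \<in> supp w. kf lab p = k}. (cmod (vk idx lab m w k (fst q) (snd q)))\<^sup>2)"
    unfolding nrm_superset[OF fi vk_sub[OF w]] by (simp add: split_def)
  also have "\<dots> = (\<Sum>p\<in>{p \<in> supp w. kf lab p = k}. (cmod (vk idx lab m w k (idx (fst p)) (snd p)))\<^sup>2)"
    by (subst sum.reindex[OF vk_inj[OF w]]) (simp add: ee_def)
  also have "\<dots> = (\<Sum>p\<in>{p \<in> supp w. kf lab p = k}. (cmod (w (fst p) (snd p)))\<^sup>2)"
    by (rule sum.cong[OF refl]) (simp add: vk_val[OF w])
  finally show ?thesis .
qed

lemma vk_coeff:
  assumes u1: "\<xi> \<in> unit_vecs D m y" and u2: "\<zeta> \<in> unit_vecs D m y"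
  shows "coeff al F (vk idx lab m \<xi> k) (vk idx lab m \<zeta> k) =
    (\<Sum>s\<in>{p \<in> supp \<zeta>. kf lab p = k}. \<Sum>r\<in>{p \<in> supp \<xi>. kf lab p = k}.
       F (idx (fst s)) (idx (fst r)) (gmul (snd s) (ginv al (snd r))) * \<xi> (fst r) (snd r) * cnj (\<zeta> (fst s) (snd s)))"
proof -
  let ?S = "{p \<in> supp \<zeta>. kf lab p = k}" and ?R = "{p \<in> supp \<xi>. kf lab p = k}"
  have f1: "finite (supp \<xi>)" using u1 unfolding unit_vecs_iff by blast
  have f2: "finite (supp \<zeta>)" using u2 unfolding unit_vecs_iff by blast
  have fS: "finite (ee idx ` ?S)" and fR: "finite (ee idx ` ?R)" using f1 f2 by auto
  have "coeff al F (vk idx lab m \<xi> k) (vk idx lab m \<zeta> k) =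
     (\<Sum>(i, \<gamma>)\<in>ee idx ` ?S. \<Sum>(j, \<eta>)\<in>ee idx ` ?R.
        F i j (gmul \<gamma> (ginv al \<eta>)) * vk idx lab m \<xi> k j \<eta> * cnj (vk idx lab m \<zeta> k i \<gamma>))"
    by (rule coeff_superset[OF fS vk_sub[OF u2] fR vk_sub[OF u1]])
  also have "\<dots> = (\<Sum>s\<in>?S. \<Sum>(j, \<eta>)\<in>ee idx ` ?R.
        F (idx (fst s)) j (gmul (snd s) (ginv al \<eta>)) * vk idx lab m \<xi> k j \<eta> * cnj (vk idx lab m \<zeta> k (idx (fst s)) (snd s)))"
    by (subst sum.reindex[OF vk_inj[OF u2]]) (simp add: ee_def split_def)
  also have "\<dots> = (\<Sum>s\<in>?S. \<Sum>r\<in>?R.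
        F (idx (fst s)) (idx (fst r)) (gmul (snd s) (ginv al (snd r))) * vk idx lab m \<xi> k (idx (fst r)) (snd r) * cnj (vk idx lab m \<zeta> k (idx (fst s)) (snd s)))"
    by (rule sum.cong[OF refl], subst sum.reindex[OF vk_inj[OF u1]]) (simp add: ee_def split_def)
  also have "\<dots> = (\<Sum>s\<in>?S. \<Sum>r\<in>?R.
       F (idx (fst s)) (idx (fst r)) (gmul (snd s) (ginv al (snd r))) * \<xi> (fst r) (snd r) * cnj (\<zeta> (fst s) (snd s)))"
    by (intro sum.cong[OF refl]) (simp add: vk_val[OF u1] vk_val[OF u2])
  finally show ?thesis .
qed


lemma absorb:
  fixes F :: "nat \<Rightarrow> nat \<Rightarrow> 'a \<times> 'g \<Rightarrow> complex"
  assumes fin: "matnorm D al n F \<noteq> \<infinity>" and u1: "\<xi> \<in> unit_vecs D m y" and u2: "\<zeta> \<in> unit_vecs D m y"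
  shows "cmod (coeff al (\<lambda>a b. sl (lab a + - lab b) (F (idx a) (idx b))) \<xi> \<zeta>) \<le> enn2real (matnorm D al n F)"
proof -
  define M where "M = enn2real (matnorm D al n F)"
  have M0: "M \<ge> 0" by (simp add: M_def)
  let ?R = "supp \<xi>" and ?S = "supp \<zeta>"
  have fR: "finite ?R" using u1 unfolding unit_vecs_iff by blast
  have fS: "finite ?S" using u2 unfolding unit_vecs_iff by blast
  have nR: "nrm \<xi> \<le> 1" using u1 unfolding unit_vecs_iff by blast
  have nS: "nrm \<zeta> \<le> 1" using u2 unfolding unit_vecs_iff by blast
  define K where "K = kf lab ` (?S \<union> ?R)"
  have fK: "finite K" unfolding K_def using fR fS by simp
  define X where "X s r = F (idx (fst s)) (idx (fst r)) (gmul (snd s) (ginv al (snd r))) * \<xi> (fst r) (snd r) * cnj (\<zeta> (fst s) (snd s))" for s r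
  have cond: "(snd (gmul (snd s) (ginv al (snd r))) = lab (fst s) + - lab (fst r)) = (kf lab s = kf lab r)" for s r :: "nat \<times> ('a \<times> 'g)"
    unfolding gmul_def ginv_def kf_def by (simp only: snd_conv fst_conv grp3)
  have trm: "sl (lab (fst s) + - lab (fst r)) (F (idx (fst s)) (idx (fst r))) (gmul (snd s) (ginv al (snd r))) *
      \<xi> (fst r) (snd r) * cnj (\<zeta> (fst s) (snd s)) = (if kf lab s = kf lab r then X s r else 0)" for s r
    unfolding sl_def X_def cond by simp
  have "coeff al (\<lambda>a b. sl (lab a + - lab b) (F (idx a) (idx b))) \<xi> \<zeta> =
        (\<Sum>s\<in>?S. \<Sum>r\<in>?R. if kf lab s = kf lab r then X s r else 0)"
    unfolding coeff_supp split_def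
    by (intro sum.cong[OF refl]) (rule trm)
  also have "\<dots> = (\<Sum>k\<in>K. \<Sum>s\<in>{s\<in>?S. kf lab s = k}. \<Sum>r\<in>{r\<in>?R. kf lab r = k}. X s r)"
    by (rule group_pairs[OF fS fR fK]) (auto simp: K_def)
  also have "\<dots> = (\<Sum>k\<in>K. coeff al F (vk idx lab m \<xi> k) (vk idx lab m \<zeta> k))"
    unfolding X_def by (intro sum.cong[OF refl]) (simp add: vk_coeff[OF u1 u2])
  finally have eq: "coeff al (\<lambda>a b. sl (lab a + - lab b) (F (idx a) (idx b))) \<xi> \<zeta> =
      (\<Sum>k\<in>K. coeff al F (vk idx lab m \<xi> k) (vk idx lab m \<zeta> k))" .
  have b1: "cmod (coeff al F (vk idx lab m \<xi> k) (vk idx lab m \<zeta> k)) \<le>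
      M * ((nrm (vk idx lab m \<xi> k) + nrm (vk idx lab m \<zeta> k)) / 2)" for k
  proof -
    have p1: "finite (supp (vk idx lab m \<xi> k))" "\<forall>j \<eta>. vk idx lab m \<xi> k j \<eta> \<noteq> 0 \<longrightarrow> j < n \<and> \<eta> \<in> fibre D y"
      using vk_props[OF u1] by blast+
    have p2: "finite (supp (vk idx lab m \<zeta> k))" "\<forall>j \<eta>. vk idx lab m \<zeta> k j \<eta> \<noteq> 0 \<longrightarrow> j < n \<and> \<eta> \<in> fibre D y"
      using vk_props[OF u2] by blast+
    have "cmod (coeff al F (vk idx lab m \<xi> k) (vk idx lab m \<zeta> k)) \<le>
        M * sqrt (nrm (vk idx lab m \<xi> k)) * sqrt (nrm (vk idx lab m \<zeta> k))"
      unfolding M_def by (rule coeff_scale_bound[OF p1(1) p2(1) p1(2) p2(2) fin])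
    also have "\<dots> = M * (sqrt (nrm (vk idx lab m \<xi> k)) * sqrt (nrm (vk idx lab m \<zeta> k)))" by simp
    also have "\<dots> \<le> M * ((nrm (vk idx lab m \<xi> k) + nrm (vk idx lab m \<zeta> k)) / 2)"
      by (intro mult_left_mono sqrt_amgm nrm_nonneg M0)
    finally show ?thesis .
  qed
  have sumn: "(\<Sum>k\<in>K. nrm (vk idx lab m w k)) = nrm w" if w: "w \<in> unit_vecs D m y" and sub: "supp w \<subseteq> ?S \<union> ?R" for w
  proof -
    have fw: "finite (supp w)" using w unfolding unit_vecs_iff by blast
    have "(\<Sum>k\<in>K. nrm (vk idx lab m w k)) = (\<Sum>k\<in>K. \<Sum>p\<in>{p \<in> supp w. kf lab p = k}. (cmod (w (fst p) (snd p)))\<^sup>2)"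
      by (intro sum.cong[OF refl]) (simp add: vk_nrm[OF w])
    also have "\<dots> = (\<Sum>p\<in>supp w. (cmod (w (fst p) (snd p)))\<^sup>2)"
      by (rule sum.group[OF fw fK]) (use sub in \<open>auto simp: K_def\<close>)
    also have "\<dots> = nrm w" by (simp add: nrm_def split_def)
    finally show ?thesis .
  qed
  have "cmod (coeff al (\<lambda>a b. sl (lab a + - lab b) (F (idx a) (idx b))) \<xi> \<zeta>) \<le>
      (\<Sum>k\<in>K. cmod (coeff al F (vk idx lab m \<xi> k) (vk idx lab m \<zeta> k)))"
    unfolding eq by (rule norm_sum)
  also have "\<dots> \<le> (\<Sum>k\<in>K. M * ((nrm (vk idx lab m \<xi> k) + nrm (vk idx lab m \<zeta> k)) / 2))"
    by (intro sum_mono b1)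
  also have "\<dots> = (\<Sum>k\<in>K. M / 2 * nrm (vk idx lab m \<xi> k) + M / 2 * nrm (vk idx lab m \<zeta> k))"
    by (rule sum.cong[OF refl]) (simp add: algebra_simps)
  also have "\<dots> = M / 2 * (\<Sum>k\<in>K. nrm (vk idx lab m \<xi> k)) + M / 2 * (\<Sum>k\<in>K. nrm (vk idx lab m \<zeta> k))"
    by (simp add: sum.distrib sum_distrib_left)
  also have "\<dots> = M / 2 * (nrm \<xi> + nrm \<zeta>)"
    using sumn[OF u1] sumn[OF u2] by (simp add: distrib_left)
  also have "\<dots> \<le> M / 2 * (1 + 1)"
    using nR nS M0 by (intro mult_left_mono add_mono) auto
  finally show ?thesis by (simp add: M_def)
qed

end

definition lift :: "(nat \<Rightarrow> nat \<times> 'g) \<Rightarrow> nat \<Rightarrow> 'a \<Rightarrow> (nat \<Rightarrow> 'a \<times> 'g \<Rightarrow> complex) \<Rightarrow> (nat \<Rightarrow> 'a \<times> 'g \<Rightarrow> complex)" where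
  "lift h m x w = (\<lambda>a \<eta>. if a < m \<and> \<eta> = (x, snd (h a)) then w (fst (h a)) \<eta> else 0)"

lemma lift_props:
  fixes h :: "nat \<Rightarrow> nat \<times> 'g::group_add" and D :: "'g \<Rightarrow> 'a::topological_space set"
  assumes hb: "bij_betw h {0..<m} ({..<n} \<times> P)" and w: "w \<in> unit_vecs D n x"
    and Pw: "\<And>p. p \<in> supp w \<Longrightarrow> snd (snd p) \<in> P"
  shows "bij_betw (ee (\<lambda>a. fst (h a))) (supp (lift h m x w)) (supp w)"
    and "\<And>p. p \<in> supp (lift h m x w) \<Longrightarrow> fst p < m \<and> snd p = (x, snd (h (fst p))) \<and>
             lift h m x w (fst p) (snd p) = w (fst (h (fst p))) (snd p)"
    and "lift h m x w \<in> unit_vecs D m x"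
proof -
  have injh: "inj_on h {0..<m}" using hb by (simp add: bij_betw_def)
  have wprop: "\<And>i \<eta>. w i \<eta> \<noteq> 0 \<Longrightarrow> i < n \<and> \<eta> \<in> fibre D x" using w unfolding unit_vecs_iff by blast
  have fw: "finite (supp w)" and nw: "nrm w \<le> 1" using w unfolding unit_vecs_iff by blast+
  show P2: "\<And>p. p \<in> supp (lift h m x w) \<Longrightarrow> fst p < m \<and> snd p = (x, snd (h (fst p))) \<and>
             lift h m x w (fst p) (snd p) = w (fst (h (fst p))) (snd p)"
    by (auto simp: supp_def lift_def split: if_splits)
  show B: "bij_betw (ee (\<lambda>a. fst (h a))) (supp (lift h m x w)) (supp w)"
  proof (rule bij_betw_imageI)
    show "inj_on (ee (\<lambda>a. fst (h a))) (supp (lift h m x w))"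
    proof (rule inj_onI)
      fix p q assume p: "p \<in> supp (lift h m x w)" and q: "q \<in> supp (lift h m x w)"
        and e: "ee (\<lambda>a. fst (h a)) p = ee (\<lambda>a. fst (h a)) q"
      have pp: "fst p < m" "snd p = (x, snd (h (fst p)))" using P2[OF p] by auto
      have qq: "fst q < m" "snd q = (x, snd (h (fst q)))" using P2[OF q] by auto
      have s: "snd p = snd q" and f: "fst (h (fst p)) = fst (h (fst q))" using e by (auto simp: ee_def)
      have "snd (h (fst p)) = snd (h (fst q))" using pp(2) qq(2) s by simp
      then have "h (fst p) = h (fst q)" using f by (simp add: prod_eq_iff)
      then have "fst p = fst q" using injh pp(1) qq(1) unfolding inj_on_def by auto
      then show "p = q" using s by (simp add: prod_eq_iff)
    qed
    show "ee (\<lambda>a. fst (h a)) ` supp (lift h m x w) = supp w"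
    proof
      show "ee (\<lambda>a. fst (h a)) ` supp (lift h m x w) \<subseteq> supp w"
      proof
        fix q assume "q \<in> ee (\<lambda>a. fst (h a)) ` supp (lift h m x w)"
        then obtain p where p: "p \<in> supp (lift h m x w)" and q: "q = ee (\<lambda>a. fst (h a)) p" by blast
        have "lift h m x w (fst p) (snd p) \<noteq> 0" using p by (simp add: supp_def split_def)
        then have "w (fst (h (fst p))) (snd p) \<noteq> 0" using P2[OF p] by metis
        then show "q \<in> supp w" using q by (simp add: supp_def ee_def)
      qed
      show "supp w \<subseteq> ee (\<lambda>a. fst (h a)) ` supp (lift h m x w)"
      proof
        fix q assume q: "q \<in> supp w"
        obtain i \<eta> where qi: "q = (i, \<eta>)" by (cases q)
        have nz: "w i \<eta> \<noteq> 0" using q qi by (simp add: supp_def)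
        have i: "i < n" and \<eta>: "\<eta> \<in> fibre D x" using wprop[OF nz] by auto
        have \<eta>x: "\<eta> = (x, snd \<eta>)" using \<eta> by (auto simp: fibre_def)
        have "snd \<eta> \<in> P" using Pw[OF q] qi by simp
        then have "(i, snd \<eta>) \<in> h ` {0..<m}" using hb i unfolding bij_betw_def by auto
        then obtain a where a: "a < m" and ha: "h a = (i, snd \<eta>)" by auto
        have "lift h m x w a \<eta> = w i \<eta>" using a ha \<eta>x by (simp add: lift_def)
        then have "(a, \<eta>) \<in> supp (lift h m x w)" using nz by (simp add: supp_def)
        moreover have "q = ee (\<lambda>a. fst (h a)) (a, \<eta>)" using qi ha by (simp add: ee_def)
        ultimately show "q \<in> ee (\<lambda>a. fst (h a)) ` supp (lift h m x w)" by blast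
      qed
    qed
  qed
  have c1: "finite (supp (lift h m x w))" using bij_betw_finite[OF B] fw by simp
  have c2: "\<forall>a \<eta>. lift h m x w a \<eta> \<noteq> 0 \<longrightarrow> a < m \<and> \<eta> \<in> fibre D x"
  proof (intro allI impI)
    fix a \<eta> assume nz: "lift h m x w a \<eta> \<noteq> 0"
    then have "a < m" and "w (fst (h a)) \<eta> \<noteq> 0" by (auto simp: lift_def split: if_splits)
    then show "a < m \<and> \<eta> \<in> fibre D x" using wprop by blast
  qed
  have c3: "nrm (lift h m x w) \<le> 1"
  proof -
    have "nrm (lift h m x w) = (\<Sum>p\<in>supp (lift h m x w). (cmod (w (fst (ee (\<lambda>a. fst (h a)) p)) (snd (ee (\<lambda>a. fst (h a)) p))))\<^sup>2)"
      unfolding nrm_def split_def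
    proof (rule sum.cong[OF refl])
      fix p assume p: "p \<in> supp (lift h m x w)"
      have "lift h m x w (fst p) (snd p) = w (fst (h (fst p))) (snd p)" using P2[OF p] by blast
      then show "(cmod (lift h m x w (fst p) (snd p)))\<^sup>2 = (cmod (w (fst (ee (\<lambda>a. fst (h a)) p)) (snd (ee (\<lambda>a. fst (h a)) p))))\<^sup>2"
        by (simp add: ee_def)
    qed
    also have "\<dots> = (\<Sum>q\<in>supp w. (cmod (w (fst q) (snd q)))\<^sup>2)"
      by (rule sum.reindex_bij_betw[OF B])
    also have "\<dots> = nrm w" by (simp add: nrm_def split_def)
    finally show "nrm (lift h m x w) \<le> 1" using nw by simp
  qed
  show "lift h m x w \<in> unit_vecs D m x" unfolding unit_vecs_iff using c1 c2 c3 by blast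
qed


lemma cb_term:
  fixes D :: "'g::group_add \<Rightarrow> 'a::t2_space set"
  assumes pa: "partial_action D al" and cpt: "\<forall>t. compact (D t)" and T: "bounded_Alinear D al T"
    and f: "f \<in> Cr D al" and xp: "x \<in> D (- p)" and xq: "x \<in> D (- q)"
  shows "T (sl (p + - q) f) (gmul (x, p) (ginv al (x, q))) =
         phiT D al T (gmul (x, p) (ginv al (x, q))) * f (gmul (x, p) (ginv al (x, q)))"
proof -
  define s where "s = p + - q"
  define z where "z = al q x"
  have g: "gmul (x, p) (ginv al (x, q)) = (z, s)" by (simp add: gmul_ginv z_def s_def)
  have zs: "z \<in> D (- s)" unfolding z_def s_def by (rule pa_gm[OF pa xp xq])
  have chiC: "chi D s \<in> Cr D al" by (rule Cc_Cr[OF chi_Cc[OF cpt]])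
  have c0: "C0 (slfun D s f)" by (rule slfun_C0[OF pa cpt f])
  have lin: "T (ract (chi D s) (slfun D s f)) = ract (T (chi D s)) (slfun D s f)"
    using T chiC c0 unfolding bounded_Alinear_def by blast
  have "T (sl s f) (z, s) = ract (T (chi D s)) (slfun D s f) (z, s)"
    by (simp add: sl_ract[OF f] lin)
  also have "\<dots> = T (chi D s) (z, s) * f (z, s)" using zs by (simp add: ract_def slfun_def)
  also have "\<dots> = phiT D al T (z, s) * f (z, s)" by (simp add: phiT_eq[OF pa zs])
  finally show ?thesis by (simp add: g s_def)
qed

lemma part2_cb:
  fixes D :: "'g::group_add \<Rightarrow> 'a::t2_space set"
  assumes pa: "partial_action D al" and cpt: "\<forall>t. compact (D t)" and T: "bounded_Alinear D al T"
  shows "M0A_norm D al (phiT D al T) \<le> cbnorm D al T"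
proof -
  let ?\<phi> = "phiT D al T"
  have key: "matnorm D al n (\<lambda>i j \<gamma>. ?\<phi> \<gamma> * F i j \<gamma>) \<le> cbnorm D al T"
    if F: "\<forall>i<n. \<forall>j<n. F i j \<in> Cr D al" and F1: "matnorm D al n F \<le> 1" for n F
    unfolding matnorm_def[of D al n "\<lambda>i j \<gamma>. ?\<phi> \<gamma> * F i j \<gamma>"]
  proof (intro SUP_least)
    fix x \<xi> \<zeta> assume u1: "\<xi> \<in> unit_vecs D n x" and u2: "\<zeta> \<in> unit_vecs D n x"
    have f1: "finite (supp \<xi>)" using u1 unfolding unit_vecs_iff by blast
    have f2: "finite (supp \<zeta>)" using u2 unfolding unit_vecs_iff by blast
    define P where "P = snd ` snd ` (supp \<xi> \<union> supp \<zeta>)"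
    define Q where "Q = {..<n} \<times> P"
    have fQ: "finite Q" unfolding Q_def P_def using f1 f2 by simp
    obtain h where hb0: "bij_betw h {0..<card Q} Q" using ex_bij_betw_nat_finite[OF fQ] by blast
    define m where "m = card Q"
    have hb: "bij_betw h {0..<m} ({..<n} \<times> P)" using hb0 by (simp add: m_def Q_def)
    define idx where "idx a = fst (h a)" for a
    define lab where "lab a = snd (h a)" for a
    have idxlt: "idx a < n" if "a < m" for a
    proof -
      have "a \<in> {0..<m}" using that by simp
      then have "h a \<in> {..<n} \<times> P" using bij_betwE[OF hb] by blast
      then show ?thesis by (auto simp: idx_def)
    qed
    have injl: "inj_on (\<lambda>a. (idx a, lab a)) {..<m}"
    proof -
      have "inj_on h {..<m}" using hb by (simp add: bij_betw_def atLeast0LessThan)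
      then show ?thesis by (simp add: idx_def lab_def)
    qed
    define F' where "F' a b = sl (lab a + - lab b) (F (idx a) (idx b))" for a b
    have fin: "matnorm D al n F \<noteq> \<infinity>" using F1
      by (metis ennreal_one_neq_top infinity_ennreal_def neq_top_trans)
    have adm: "F' \<in> {F. (\<forall>i<m. \<forall>j<m. F i j \<in> Cr D al) \<and> matnorm D al m F \<le> 1}"
    proof (simp, intro conjI allI impI)
      fix a b assume "a < m" "b < m"
      then have "F (idx a) (idx b) \<in> Cr D al" using F idxlt by blast
      then show "F' a b \<in> Cr D al" unfolding F'_def by (rule Cc_Cr[OF sl_Cc[OF pa cpt]])
    next
      have "matnorm D al m F' \<le> ennreal 1"
      proof (rule matnorm_le)
        fix y \<xi>'' \<zeta>'' assume v1: "\<xi>'' \<in> unit_vecs D m y" and v2: "\<zeta>'' \<in> unit_vecs D m y"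
        have "cmod (coeff al F' \<xi>'' \<zeta>'') \<le> enn2real (matnorm D al n F)"
          unfolding F'_def[abs_def] by (rule absorb[OF idxlt injl fin v1 v2])
        also have "\<dots> \<le> 1" using F1 by (metis enn2real_le_iff ennreal_one_neq_top enn2real_1 enn2real_mono top.not_eq_extremum infinity_ennreal_def)
        finally show "cmod (coeff al F' \<xi>'' \<zeta>'') \<le> 1" .
      qed
      then show "matnorm D al m F' \<le> 1" by simp
    qed
    define \<xi>' where "\<xi>' = lift h m x \<xi>"
    define \<zeta>' where "\<zeta>' = lift h m x \<zeta>"
    have P1: "\<And>p. p \<in> supp \<xi> \<Longrightarrow> snd (snd p) \<in> P" and P2: "\<And>p. p \<in> supp \<zeta> \<Longrightarrow> snd (snd p) \<in> P"
      unfolding P_def by auto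
    have B1: "bij_betw (ee idx) (supp \<xi>') (supp \<xi>)"
      using lift_props(1)[OF hb u1 P1] unfolding \<xi>'_def idx_def[abs_def] .
    have B2: "bij_betw (ee idx) (supp \<zeta>') (supp \<zeta>)"
      using lift_props(1)[OF hb u2 P2] unfolding \<zeta>'_def idx_def[abs_def] .
    have L1: "\<And>p. p \<in> supp \<xi>' \<Longrightarrow> fst p < m \<and> snd p = (x, lab (fst p)) \<and> \<xi>' (fst p) (snd p) = \<xi> (idx (fst p)) (snd p)"
      using lift_props(2)[OF hb u1 P1] unfolding \<xi>'_def idx_def lab_def by blast
    have L2: "\<And>p. p \<in> supp \<zeta>' \<Longrightarrow> fst p < m \<and> snd p = (x, lab (fst p)) \<and> \<zeta>' (fst p) (snd p) = \<zeta> (idx (fst p)) (snd p)"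
      using lift_props(2)[OF hb u2 P2] unfolding \<zeta>'_def idx_def lab_def by blast
    have U1: "\<xi>' \<in> unit_vecs D m x" unfolding \<xi>'_def by (rule lift_props(3)[OF hb u1 P1])
    have U2: "\<zeta>' \<in> unit_vecs D m x" unfolding \<zeta>'_def by (rule lift_props(3)[OF hb u2 P2])
    define \<Phi> where "\<Phi> s r = ?\<phi> (gmul (snd s) (ginv al (snd r))) * F (fst s) (fst r) (gmul (snd s) (ginv al (snd r))) *
        \<xi> (fst r) (snd r) * cnj (\<zeta> (fst s) (snd s))" for s r :: "nat \<times> ('a \<times> 'g)"
    have infib: "x \<in> D (- lab (fst p))" if p: "p \<in> supp w'" and L: "\<And>p. p \<in> supp w' \<Longrightarrow> fst p < m \<and> snd p = (x, lab (fst p)) \<and> w' (fst p) (snd p) = w (idx (fst p)) (snd p)"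
        and U: "w' \<in> unit_vecs D m x" for p w w'
    proof -
      have "w' (fst p) (snd p) \<noteq> 0" using p by (simp add: supp_def split_def)
      then have "snd p \<in> fibre D x" using U unfolding unit_vecs_iff by blast
      then show ?thesis using L[OF p] by (simp add: fibre_def)
    qed
    have "coeff al (\<lambda>a b. T (F' a b)) \<xi>' \<zeta>' = (\<Sum>s\<in>supp \<zeta>'. \<Sum>r\<in>supp \<xi>'. \<Phi> (ee idx s) (ee idx r))"
      unfolding coeff_supp split_def
    proof (intro sum.cong[OF refl])
      fix s r assume s: "s \<in> supp \<zeta>'" and r: "r \<in> supp \<xi>'"
      have sx: "snd s = (x, lab (fst s))" and sv: "\<zeta>' (fst s) (snd s) = \<zeta> (idx (fst s)) (snd s)" using L2[OF s] by auto
      have rx: "snd r = (x, lab (fst r))" and rv: "\<xi>' (fst r) (snd r) = \<xi> (idx (fst r)) (snd r)" using L1[OF r] by auto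
      have xs: "x \<in> D (- lab (fst s))" by (rule infib[OF s L2 U2])
      have xr: "x \<in> D (- lab (fst r))" by (rule infib[OF r L1 U1])
      have Fc: "F (idx (fst s)) (idx (fst r)) \<in> Cr D al"
        using F idxlt L1[OF r] L2[OF s] by blast
      have "T (F' (fst s) (fst r)) (gmul (snd s) (ginv al (snd r))) =
            ?\<phi> (gmul (snd s) (ginv al (snd r))) * F (idx (fst s)) (idx (fst r)) (gmul (snd s) (ginv al (snd r)))"
        unfolding F'_def sx rx by (rule cb_term[OF pa cpt T Fc xs xr])
      then show "T (F' (fst s) (fst r)) (gmul (snd s) (ginv al (snd r))) * \<xi>' (fst r) (snd r) * cnj (\<zeta>' (fst s) (snd s)) =
           \<Phi> (ee idx s) (ee idx r)"
        by (simp add: \<Phi>_def ee_def sv rv)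
    qed
    also have "\<dots> = (\<Sum>s\<in>supp \<zeta>. \<Sum>r\<in>supp \<xi>'. \<Phi> s (ee idx r))"
      by (rule sum.reindex_bij_betw[OF B2])
    also have "\<dots> = (\<Sum>s\<in>supp \<zeta>. \<Sum>r\<in>supp \<xi>. \<Phi> s r)"
      by (intro sum.cong[OF refl] sum.reindex_bij_betw[OF B1])
    also have "\<dots> = coeff al (\<lambda>i j \<gamma>. ?\<phi> \<gamma> * F i j \<gamma>) \<xi> \<zeta>"
      unfolding coeff_supp split_def \<Phi>_def by simp
    finally have eq: "coeff al (\<lambda>a b. T (F' a b)) \<xi>' \<zeta>' = coeff al (\<lambda>i j \<gamma>. ?\<phi> \<gamma> * F i j \<gamma>) \<xi> \<zeta>" .
    have "ennreal (cmod (coeff al (\<lambda>i j \<gamma>. ?\<phi> \<gamma> * F i j \<gamma>) \<xi> \<zeta>)) \<le> matnorm D al m (\<lambda>a b. T (F' a b))"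
      unfolding eq[symmetric] by (rule matnorm_upper[OF U1 U2])
    also have "\<dots> \<le> cbnorm D al T"
      unfolding cbnorm_def by (rule SUP_upper2[OF UNIV_I], rule SUP_upper[OF adm])
    finally show "ennreal (cmod (coeff al (\<lambda>i j \<gamma>. ?\<phi> \<gamma> * F i j \<gamma>) \<xi> \<zeta>)) \<le> cbnorm D al T" .
  qed
  show ?thesis
    unfolding M0A_norm_def cbnorm_def[of D al "\<lambda>f \<gamma>. ?\<phi> \<gamma> * f \<gamma>"]
    by (intro SUP_least) (use key in auto)
qed

theorem mainTheorem11:
  fixes D :: "'g::group_add \<Rightarrow> 'a::t2_space set"
    and al :: "'g \<Rightarrow> 'a \<Rightarrow> 'a"
    and \<mu> :: "'a measure"
    and T :: "('a \<times> 'g \<Rightarrow> complex) \<Rightarrow> ('a \<times> 'g \<Rightarrow> complex)"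
  assumes lc: "locally_compact_space (euclidean :: 'a topology)"
    and pa: "partial_action D al"
    and cpt: "\<forall>t. compact (D t)"
    and meas: "qi_full_prob D al \<mu>"
    and T: "bounded_Alinear D al T"
  shows "(Cb D (phiT D al T) \<and> (SUP \<gamma>\<in>grpd D. cmod (phiT D al T \<gamma>)) \<le> opnorm D al T) \<and>
         (finite_Arank D al T \<and> (\<forall>f\<in>Cr D al. in_span_A_chi D (T f)) \<longrightarrow>
           Cc D (phiT D al T) \<and> M0A_norm D al (phiT D al T) \<le> cbnorm D al T)"
proof -
  have p1: "Cb D (phiT D al T) \<and> (SUP \<gamma>\<in>grpd D. cmod (phiT D al T \<gamma>)) \<le> opnorm D al T"
    by (rule part1[OF pa cpt T])
  have p2: "Cc D (phiT D al T) \<and> M0A_norm D al (phiT D al T) \<le> cbnorm D al T"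
    if fr: "finite_Arank D al T" and sp: "\<forall>f\<in>Cr D al. in_span_A_chi D (T f)"
    using part2_Cc[OF pa cpt T fr sp] part2_cb[OF pa cpt T] by blast
  show ?thesis using p1 p2 by blast
qed

end
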